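(* Let $G$ be a simple 2-connected plane graph whose unbounded face $p_\infty$ has $V_\infty$ vertices. Let $(a,b)$ be an admissible state such that (1) there is a bounded face $p$ and an edge $vv'$ lying on the boundary of both $p$ and $p_\infty$ with $b_v=b_{v'}=0$ and $(b_v-b_p)(b_{v'}-b_p)=1$; (2) $a_{p'}+b_{p'}=0$ for every bounded face $p'$; (3) $(b_{v_1}-b_{p'})(b_{v_2}-b_{p'})=0$ for every bounded face $p'$ and every edge $v_1v_2$ of $p'$ that does not lie on the boundary of $p_\infty$. Then $b_w\ge-1$ for every vertex $w$, $a_{p'}=1$ for every bounded face $p'$, and $B(a,b)\ge V_\infty-2$. Moreover $B(a,b)=V_\infty-2$ if and only if $b_w=0$ for every vertex $w$ on $p_\infty$, $b_w=-1$ for every other vertex $w$, and $a_{p'}=1$ for every bounded face $p'$.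
   Context: A simple 2-connected plane graph $G$ is a simple 2-connected planar graph with a fixed embedding in the plane, so every face is bounded by a cycle. For a face $p$, $l(p)$ is the number of edges on its boundary and $v\in p$ means $v$ lies on the boundary of $p$. An admissible state $(a,b)$ assigns an integer $a_p$ to each bounded face $p$ and an integer $b_v$ to each vertex $v$ such that $a_p+b_v\ge 0$ whenever $p$ is bounded and $v\in p$, and $b_v\ge0$ for every vertex $v$ on $p_\infty$. For a bounded face $p$, $b_p=\min_{v\in p}b_v$. $B(a,b)=2\sum_{v}b_v+\sum_p (l(p)-2)a_p$, with $p$ over bounded faces and $v$ over all vertices. *)

theory Defs
  imports Main
begin

text \<open>Combinatorial model of a plane graph (Mohar--Thomassen): a simple graph given by a
symmetric irreflexive adjacency relation on a finite vertex set, a rotation system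
(for each vertex a cyclic order of its neighbours), genus 0 (Euler's formula
V - E + F = 2 for the connected graph), and a distinguished unbounded face.\<close>

definition simple_graph :: "'v set \<Rightarrow> ('v \<Rightarrow> 'v \<Rightarrow> bool) \<Rightarrow> bool" where
  "simple_graph V adj \<longleftrightarrow> finite V \<and>
     (\<forall>u v. adj u v \<longrightarrow> u \<in> V \<and> v \<in> V \<and> u \<noteq> v \<and> adj v u)"

definition connected_on :: "'v set \<Rightarrow> ('v \<Rightarrow> 'v \<Rightarrow> bool) \<Rightarrow> bool" where
  "connected_on W adj \<longleftrightarrow> W \<noteq> {} \<and>
     (\<forall>u\<in>W. \<forall>v\<in>W. (\<lambda>x y. adj x y \<and> x \<in> W \<and> y \<in> W)\<^sup>*\<^sup>* u v)"

definition two_connected :: "'v set \<Rightarrow> ('v \<Rightarrow> 'v \<Rightarrow> bool) \<Rightarrow> bool" where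
  "two_connected V adj \<longleftrightarrow> card V \<ge> 3 \<and> connected_on V adj \<and>
     (\<forall>x\<in>V. connected_on (V - {x}) adj)"

definition nbrs :: "('v \<Rightarrow> 'v \<Rightarrow> bool) \<Rightarrow> 'v \<Rightarrow> 'v set" where
  "nbrs adj v = {u. adj v u}"

definition graph_edges :: "('v \<Rightarrow> 'v \<Rightarrow> bool) \<Rightarrow> 'v set set" where
  "graph_edges adj = {{u, v} | u v. adj u v}"

definition darts :: "('v \<Rightarrow> 'v \<Rightarrow> bool) \<Rightarrow> ('v \<times> 'v) set" where
  "darts adj = {(u, v). adj u v}"

definition rotation_system :: "'v set \<Rightarrow> ('v \<Rightarrow> 'v \<Rightarrow> bool) \<Rightarrow> ('v \<Rightarrow> 'v \<Rightarrow> 'v) \<Rightarrow> bool" where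
  "rotation_system V adj rot \<longleftrightarrow>
     (\<forall>v\<in>V. bij_betw (rot v) (nbrs adj v) (nbrs adj v) \<and>
       (\<forall>u\<in>nbrs adj v. \<forall>w\<in>nbrs adj v. \<exists>n. (rot v ^^ n) u = w))"

definition face_step :: "('v \<Rightarrow> 'v \<Rightarrow> 'v) \<Rightarrow> 'v \<times> 'v \<Rightarrow> 'v \<times> 'v" where
  "face_step rot d = (snd d, rot (snd d) (fst d))"

definition face_of :: "('v \<Rightarrow> 'v \<Rightarrow> 'v) \<Rightarrow> 'v \<times> 'v \<Rightarrow> ('v \<times> 'v) set" where
  "face_of rot d = range (\<lambda>n. (face_step rot ^^ n) d)"

definition faces :: "('v \<Rightarrow> 'v \<Rightarrow> bool) \<Rightarrow> ('v \<Rightarrow> 'v \<Rightarrow> 'v) \<Rightarrow> ('v \<times> 'v) set set" where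
  "faces adj rot = face_of rot ` darts adj"

definition face_verts :: "('v \<times> 'v) set \<Rightarrow> 'v set" where
  "face_verts p = fst ` p"

definition face_edges :: "('v \<times> 'v) set \<Rightarrow> 'v set set" where
  "face_edges p = {{u, v} | u v. (u, v) \<in> p}"

definition face_len :: "('v \<times> 'v) set \<Rightarrow> nat" where
  "face_len p = card (face_edges p)"

definition plane_graph ::
  "'v set \<Rightarrow> ('v \<Rightarrow> 'v \<Rightarrow> bool) \<Rightarrow> ('v \<Rightarrow> 'v \<Rightarrow> 'v) \<Rightarrow> ('v \<times> 'v) set \<Rightarrow> bool" where
  "plane_graph V adj rot pinf \<longleftrightarrow>
     simple_graph V adj \<and> two_connected V adj \<and> rotation_system V adj rot \<and>
     int (card V) - int (card (graph_edges adj)) + int (card (faces adj rot)) = 2 \<and>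
     pinf \<in> faces adj rot"

definition bounded_faces :: "('v \<Rightarrow> 'v \<Rightarrow> bool) \<Rightarrow> ('v \<Rightarrow> 'v \<Rightarrow> 'v) \<Rightarrow> ('v \<times> 'v) set \<Rightarrow> ('v \<times> 'v) set set" where
  "bounded_faces adj rot pinf = faces adj rot - {pinf}"

definition admissible ::
  "('v \<Rightarrow> 'v \<Rightarrow> bool) \<Rightarrow> ('v \<Rightarrow> 'v \<Rightarrow> 'v) \<Rightarrow> ('v \<times> 'v) set \<Rightarrow>
   (('v \<times> 'v) set \<Rightarrow> int) \<Rightarrow> ('v \<Rightarrow> int) \<Rightarrow> bool" where
  "admissible adj rot pinf a b \<longleftrightarrow>
     (\<forall>p\<in>bounded_faces adj rot pinf. \<forall>v\<in>face_verts p. a p + b v \<ge> 0) \<and>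
     (\<forall>v\<in>face_verts pinf. b v \<ge> 0)"

definition bface :: "('v \<Rightarrow> int) \<Rightarrow> ('v \<times> 'v) set \<Rightarrow> int" where
  "bface b p = Min (b ` face_verts p)"

definition Bval ::
  "'v set \<Rightarrow> ('v \<Rightarrow> 'v \<Rightarrow> bool) \<Rightarrow> ('v \<Rightarrow> 'v \<Rightarrow> 'v) \<Rightarrow> ('v \<times> 'v) set \<Rightarrow>
   (('v \<times> 'v) set \<Rightarrow> int) \<Rightarrow> ('v \<Rightarrow> int) \<Rightarrow> int" where
  "Bval V adj rot pinf a b = 2 * (\<Sum>v\<in>V. b v) +
     (\<Sum>p\<in>bounded_faces adj rot pinf. (int (face_len p) - 2) * a p)"

end

theory Submission
  imports Defs
begin

definition orb :: "('a \<Rightarrow> 'a) \<Rightarrow> 'a \<Rightarrow> 'a set" where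
  "orb f x = range (\<lambda>n. (f ^^ n) x)"

definition cycs :: "('a \<Rightarrow> 'a) \<Rightarrow> 'a set \<Rightarrow> 'a set set" where
  "cycs f S = orb f ` S"

definition permon :: "('a \<Rightarrow> 'a) \<Rightarrow> 'a set \<Rightarrow> bool" where
  "permon f S \<longleftrightarrow> finite S \<and> f ` S \<subseteq> S \<and> inj_on f S"

definition sw :: "'a \<Rightarrow> 'a \<Rightarrow> 'a \<Rightarrow> 'a" where
  "sw a b x = (if x = a then b else if x = b then a else x)"

lemma funpow_app: "(f^^m) ((f^^n) x) = (f^^(m+n)) x"
  by (simp add: funpow_add)

lemma orb_self: "x \<in> orb f x"
  unfolding orb_def by (rule range_eqI[where x=0]) simp

lemma orb_funpow: "(f^^n) x \<in> orb f x"
  unfolding orb_def by (rule rangeI)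

lemma orb_step: assumes "y \<in> orb f x" shows "f y \<in> orb f x"
proof -
  obtain n where "y = (f^^n) x" using assms unfolding orb_def by blast
  then have "f y = (f^^Suc n) x" by simp
  then show ?thesis unfolding orb_def by (rule range_eqI)
qed

lemma orb_trans: assumes "y \<in> orb f x" shows "orb f y \<subseteq> orb f x"
proof
  fix z assume "z \<in> orb f y"
  obtain n where n: "y = (f^^n) x" using assms unfolding orb_def by blast
  obtain m where "z = (f^^m) y" using \<open>z \<in> orb f y\<close> unfolding orb_def by blast
  then have "z = (f^^(m+n)) x" using n by (simp add: funpow_app)
  then show "z \<in> orb f x" unfolding orb_def by (rule range_eqI)
qed

lemma permon_funpow_in: "permon f S \<Longrightarrow> x \<in> S \<Longrightarrow> (f^^n) x \<in> S"
  by (induction n) (auto simp: permon_def)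

lemma orb_subset: assumes "permon f S" "x\<in>S" shows "orb f x \<subseteq> S"
  unfolding orb_def using permon_funpow_in[OF assms] by auto

lemma permon_inj_funpow: "permon f S \<Longrightarrow> x\<in>S \<Longrightarrow> y\<in>S \<Longrightarrow> (f^^n) x = (f^^n) y \<Longrightarrow> x = y"
proof (induction n)
  case 0 then show ?case by simp
next
  case (Suc n)
  have "f ((f^^n) x) = f ((f^^n) y)" using Suc.prems(4) by simp
  moreover have "(f^^n) x \<in> S" "(f^^n) y \<in> S" using permon_funpow_in Suc.prems by auto
  ultimately have "(f^^n) x = (f^^n) y" using Suc.prems(1) unfolding permon_def inj_on_def by blast
  then show ?case by (rule Suc.IH[OF Suc.prems(1-3)])
qed

lemma permon_period: assumes "permon f S" "x \<in> S" shows "\<exists>p>0. (f^^p) x = x"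
proof -
  let ?h = "\<lambda>n. (f^^n) x"
  have fin: "finite S" using assms(1) unfolding permon_def by blast
  have sub: "?h ` {..card S} \<subseteq> S" using permon_funpow_in[OF assms] by auto
  have "\<not> inj_on ?h {..card S}"
  proof
    assume "inj_on ?h {..card S}"
    then have "card (?h ` {..card S}) = card S + 1" by (simp add: card_image)
    moreover have "card (?h ` {..card S}) \<le> card S" using card_mono[OF fin sub] .
    ultimately show False by simp
  qed
  then obtain i0 j0 where "i0 \<noteq> j0" "?h i0 = ?h j0"
    unfolding inj_on_def by blast
  then obtain i j where ij: "i < j" "?h i = ?h j"
  proof (cases "i0 < j0")
    case True
    then show ?thesis using that \<open>?h i0 = ?h j0\<close> by blast
  next
    case False
    then have "j0 < i0" using \<open>i0 \<noteq> j0\<close> by simp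
    then show ?thesis using that \<open>?h i0 = ?h j0\<close> by metis
  qed
  have "(f^^i) ((f^^(j-i)) x) = (f^^i) x"
    using ij by (simp add: funpow_app)
  then have "(f^^(j-i)) x = x"
    by (rule permon_inj_funpow[OF assms(1) permon_funpow_in[OF assms] assms(2)])
  then show ?thesis using ij(1) zero_less_diff by blast
qed

lemma funpow_period_mult: "(f^^p) x = x \<Longrightarrow> (f^^(p*k)) x = x"
  by (induction k) (auto simp: funpow_add)

lemma orb_sym: assumes "permon f S" "x \<in> S" "y \<in> orb f x" shows "x \<in> orb f y"
proof -
  obtain p where p: "p > 0" "(f^^p) x = x" using permon_period[OF assms(1,2)] by blast
  obtain k where k: "y = (f^^k) x" using assms(3) unfolding orb_def by auto
  have "p*k \<ge> k" using p by simp
  then have "p*k - k + k = p*k" by simp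
  then have "(f^^(p*k - k)) y = (f^^(p*k)) x"
    unfolding k funpow_app by simp
  also have "\<dots> = x" by (rule funpow_period_mult[OF p(2)])
  finally have "(f^^(p*k - k)) y = x" .
  then show ?thesis using orb_funpow[where f=f and n="p*k-k" and x=y] by simp
qed

lemma orb_eq: assumes "permon f S" "x\<in>S" "y \<in> orb f x" shows "orb f y = orb f x"
  by (rule subset_antisym[OF orb_trans[OF assms(3)] orb_trans[OF orb_sym[OF assms]]])

lemma orb_disj: assumes "permon f S" "x\<in>S" "y\<in>S" "z \<in> orb f x" "z \<in> orb f y"
  shows "orb f x = orb f y"
  using orb_eq[OF assms(1,2,4)] orb_eq[OF assms(1,3,5)] by simp

lemma orb_cycle: assumes "(g^^n) x = x" "0<n" shows "orb g x = (\<lambda>j. (g^^j) x) ` {..<n}"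
proof
  show "(\<lambda>j. (g^^j) x) ` {..<n} \<subseteq> orb g x" unfolding orb_def by auto
  show "orb g x \<subseteq> (\<lambda>j. (g^^j) x) ` {..<n}"
  proof
    fix y assume "y \<in> orb g x"
    then obtain m where m: "y = (g^^m) x" unfolding orb_def by blast
    have "(g^^(m mod n)) x = (g^^m) x" by (rule funpow_mod_eq[OF assms(1)])
    moreover have "m mod n < n" using assms(2) by simp
    ultimately show "y \<in> (\<lambda>j. (g^^j) x) ` {..<n}" using m by (metis imageI lessThan_iff)
  qed
qed

lemma sw_in: "a\<in>S \<Longrightarrow> b\<in>S \<Longrightarrow> x \<in> S \<Longrightarrow> sw a b x \<in> S"
  unfolding sw_def by simp

lemma sw_sw: "sw a b (sw a b x) = x"
  unfolding sw_def by simp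

lemma permon_sw: assumes "permon f S" "a\<in>S" "b\<in>S" shows "permon (f \<circ> sw a b) S"
  unfolding permon_def
proof (intro conjI)
  show "finite S" using assms(1) permon_def by blast
  show "(f \<circ> sw a b) ` S \<subseteq> S"
  proof
    fix y assume "y \<in> (f \<circ> sw a b) ` S"
    then obtain x where "x \<in> S" "y = f (sw a b x)" by auto
    then show "y \<in> S" using sw_in[OF assms(2,3)] assms(1) unfolding permon_def by blast
  qed
  show "inj_on (f \<circ> sw a b) S"
  proof (rule inj_onI)
    fix x y assume "x\<in>S" "y\<in>S" "(f \<circ> sw a b) x = (f \<circ> sw a b) y"
    then have "sw a b x = sw a b y"
      using sw_in[OF assms(2,3)] assms(1) unfolding permon_def inj_on_def by simp
    then show "x = y" by (metis sw_sw)
  qed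
qed

lemma orb_agree:
  assumes "\<And>n. (f^^n) x \<noteq> a" "\<And>n. (f^^n) x \<noteq> b"
  shows "orb (f \<circ> sw a b) x = orb f x"
proof -
  have "((f \<circ> sw a b)^^n) x = (f^^n) x" for n
  proof (induction n)
    case 0 show ?case by simp
  next
    case (Suc n)
    have "sw a b ((f^^n) x) = (f^^n) x" using assms unfolding sw_def by simp
    then show ?case using Suc by simp
  qed
  then show ?thesis unfolding orb_def by simp
qed

lemma least_period:
  assumes "permon f S" "a \<in> S"
  defines "m \<equiv> LEAST m. 0 < m \<and> (f^^m) a = a"
  shows "0 < m" "(f^^m) a = a" "\<And>i. 0 < i \<Longrightarrow> i < m \<Longrightarrow> (f^^i) a \<noteq> a"
    "\<And>i j. i < m \<Longrightarrow> j < m \<Longrightarrow> (f^^i) a = (f^^j) a \<Longrightarrow> i = j"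
proof -
  obtain p where "p > 0" "(f^^p) a = a" using permon_period[OF assms(1,2)] by blast
  then have "0 < p \<and> (f^^p) a = a" by simp
  then have ex: "0 < m \<and> (f^^m) a = a" unfolding m_def by (rule LeastI)
  then show "0 < m" "(f^^m) a = a" by auto
  show nl: "\<And>i. 0 < i \<Longrightarrow> i < m \<Longrightarrow> (f^^i) a \<noteq> a"
  proof
    fix i assume "0 < i" "i < m" "(f^^i) a = a"
    then have "0 < i \<and> (f^^i) a = a" by simp
    then have "m \<le> i" unfolding m_def by (rule Least_le)
    then show False using \<open>i < m\<close> by simp
  qed
  have *: "i = j" if "i < j" "j < m" "(f^^i) a = (f^^j) a" for i j
  proof -
    have "(f^^i) ((f^^(j-i)) a) = (f^^i) a"
      using that by (simp add: funpow_app)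
    then have "(f^^(j-i)) a = a"
      by (rule permon_inj_funpow[OF assms(1) permon_funpow_in[OF assms(1,2)] assms(2)])
    then show ?thesis using nl[of "j-i"] that by simp
  qed
  show "\<And>i j. i < m \<Longrightarrow> j < m \<Longrightarrow> (f^^i) a = (f^^j) a \<Longrightarrow> i = j"
  proof -
    fix i j assume "i < m" "j < m" "(f^^i) a = (f^^j) a"
    show "i = j"
    proof (cases i j rule: linorder_cases)
      case less then show ?thesis using * \<open>j < m\<close> \<open>(f^^i) a = (f^^j) a\<close> by blast
    next
      case equal then show ?thesis .
    next
      case greater then show ?thesis using * \<open>i < m\<close> \<open>(f^^i) a = (f^^j) a\<close> by fastforce
    qed
  qed
qed

lemma not_in_orb_agree:
  assumes P: "permon f S" and aS: "a\<in>S" and bS: "b\<in>S" and xS: "x \<in> S"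
    and xa: "x \<notin> orb f a" and xb: "x \<notin> orb f b"
  shows "orb (f \<circ> sw a b) x = orb f x"
proof (rule orb_agree)
  fix n
  show "(f^^n) x \<noteq> a"
  proof
    assume "(f^^n) x = a"
    then have "a \<in> orb f x" using orb_funpow[where f=f and n=n and x=x] by simp
    then have "x \<in> orb f a" by (rule orb_sym[OF P xS])
    then show False using xa by simp
  qed
  show "(f^^n) x \<noteq> b"
  proof
    assume "(f^^n) x = b"
    then have "b \<in> orb f x" using orb_funpow[where f=f and n=n and x=x] by simp
    then have "x \<in> orb f b" by (rule orb_sym[OF P xS])
    then show False using xb by simp
  qed
qed

lemma sw_same:
  assumes P: "permon f S" and aS: "a\<in>S" and bS: "b\<in>S" and ab: "a\<noteq>b" and bo: "b \<in> orb f a"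
  defines "g \<equiv> f \<circ> sw a b"
  shows "orb g a \<inter> orb g b = {}" "orb g a \<union> orb g b = orb f a"
    "cycs g S = insert (orb g a) (insert (orb g b) (cycs f S - {orb f a}))"
proof -
  define m where "m = (LEAST m. 0 < m \<and> (f^^m) a = a)"
  note lp = least_period[OF P aS, folded m_def]
  have m0: "0<m" and fm: "(f^^m) a = a" using lp by auto
  have nfix: "\<And>i. 0<i \<Longrightarrow> i<m \<Longrightarrow> (f^^i) a \<noteq> a" using lp(3) by blast
  have dist: "\<And>i j. i<m \<Longrightarrow> j<m \<Longrightarrow> (f^^i) a = (f^^j) a \<Longrightarrow> i = j" using lp(4) by blast
  obtain n0 where n0: "b = (f^^n0) a" using bo unfolding orb_def by blast
  have n0m: "(f^^(n0 mod m)) a = b" using funpow_mod_eq[OF fm, of n0] n0 by simp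
  define k where "k = (LEAST k. (f^^k) a = b)"
  have fk: "(f^^k) a = b" unfolding k_def by (rule LeastI[where P="\<lambda>k. (f^^k) a = b", OF n0m])
  have "k \<le> n0 mod m" unfolding k_def by (rule Least_le[where P="\<lambda>k. (f^^k) a = b", OF n0m])
  moreover have "n0 mod m < m" using m0 by simp
  ultimately have km: "k < m" by simp
  have k0: "0 < k"
  proof (rule ccontr)
    assume "\<not> 0 < k" then have "k = 0" by simp
    then show False using fk ab by simp
  qed
  have kmin: "\<And>i. i<k \<Longrightarrow> (f^^i) a \<noteq> b" unfolding k_def using not_less_Least by blast
  have neqb: "\<And>i. i<m \<Longrightarrow> i \<noteq> k \<Longrightarrow> (f^^i) a \<noteq> b"
  proof
    fix i assume "i<m" "i\<noteq>k" "(f^^i) a = b"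
    then have "(f^^i) a = (f^^k) a" using fk by simp
    then show False using dist[OF \<open>i<m\<close> km] \<open>i\<noteq>k\<close> by simp
  qed
  have gx: "\<And>y. y \<noteq> a \<Longrightarrow> y \<noteq> b \<Longrightarrow> g y = f y" "g a = f b" "g b = f a"
    using ab by (auto simp: g_def sw_def)
  have A: "(g^^j) a = (f^^(k+j)) a" if "0<j" "j \<le> m-k" for j
    using that
  proof (induction j)
    case 0 then show ?case by simp
  next
    case (Suc j)
    show ?case
    proof (cases "j = 0")
      case True
      then show ?thesis using fk by (simp add: gx)
    next
      case False
      then have IH: "(g^^j) a = (f^^(k+j)) a" using Suc by simp
      have "k+j < m" "0 < k+j" "k+j \<noteq> k" using Suc.prems False by auto
      then have "(f^^(k+j)) a \<noteq> a" "(f^^(k+j)) a \<noteq> b" using nfix neqb by auto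
      then show ?thesis using IH by (simp add: gx)
    qed
  qed
  have B: "(g^^j) b = (f^^j) a" if "0<j" "j \<le> k" for j
    using that
  proof (induction j)
    case 0 then show ?case by simp
  next
    case (Suc j)
    show ?case
    proof (cases "j = 0")
      case True
      then show ?thesis using ab by (simp add: gx)
    next
      case False
      then have IH: "(g^^j) b = (f^^j) a" using Suc by simp
      have "j < k" "0 < j" using Suc.prems False by auto
      then have "(f^^j) a \<noteq> a" "(f^^j) a \<noteq> b" using nfix kmin km by auto
      then show ?thesis using IH by (simp add: gx)
    qed
  qed
  have ga: "(g^^(m-k)) a = a" using A[of "m-k"] km fm by simp
  have gb: "(g^^k) b = b" using B[of k] k0 fk by simp
  define F where "F = (\<lambda>i. (f^^i) a)"
  have oga: "orb g a = F ` ({0} \<union> {k<..<m})"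
  proof -
    have "orb g a = (\<lambda>j. (g^^j) a) ` {..<m-k}" by (rule orb_cycle[OF ga]) (use km in simp)
    also have "\<dots> = F ` ({0} \<union> {k<..<m})"
    proof
      show "(\<lambda>j. (g^^j) a) ` {..<m-k} \<subseteq> F ` ({0} \<union> {k<..<m})"
      proof
        fix y assume "y \<in> (\<lambda>j. (g^^j) a) ` {..<m-k}"
        then obtain j where j: "j < m-k" "y = (g^^j) a" by auto
        show "y \<in> F ` ({0} \<union> {k<..<m})"
        proof (cases "j = 0")
          case True then show ?thesis using j unfolding F_def by (auto intro: image_eqI[where x=0])
        next
          case False
          then have "y = F (k+j)" using j A[of j] unfolding F_def by simp
          moreover have "k+j \<in> {k<..<m}" using j False by auto
          ultimately show ?thesis by blast
        qed
      qed
      show "F ` ({0} \<union> {k<..<m}) \<subseteq> (\<lambda>j. (g^^j) a) ` {..<m-k}"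
      proof
        fix y assume "y \<in> F ` ({0} \<union> {k<..<m})"
        then obtain i where i: "i \<in> {0} \<union> {k<..<m}" "y = F i" by blast
        show "y \<in> (\<lambda>j. (g^^j) a) ` {..<m-k}"
        proof (cases "i = 0")
          case True
          then have "y = (g^^0) a" using i unfolding F_def by simp
          moreover have "0 \<in> {..<m-k}" using km by simp
          ultimately show ?thesis by blast
        next
          case False
          then have i2: "k < i" "i < m" using i by auto
          then have "y = (g^^(i-k)) a" using i A[of "i-k"] unfolding F_def by simp
          moreover have "i-k \<in> {..<m-k}" using i2 by auto
          ultimately show ?thesis by blast
        qed
      qed
    qed
    finally show ?thesis .
  qed
  have ogb: "orb g b = F ` {1..k}"
  proof -
    have "orb g b = (\<lambda>j. (g^^j) b) ` {..<k}" by (rule orb_cycle[OF gb k0])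
    also have "\<dots> = F ` {1..k}"
    proof
      show "(\<lambda>j. (g^^j) b) ` {..<k} \<subseteq> F ` {1..k}"
      proof
        fix y assume "y \<in> (\<lambda>j. (g^^j) b) ` {..<k}"
        then obtain j where j: "j < k" "y = (g^^j) b" by auto
        show "y \<in> F ` {1..k}"
        proof (cases "j = 0")
          case True
          then have "y = F k" using j fk unfolding F_def by simp
          moreover have "k \<in> {1..k}" using k0 by simp
          ultimately show ?thesis by blast
        next
          case False
          then have "y = F j" using j B[of j] unfolding F_def by simp
          moreover have "j \<in> {1..k}" using j False by simp
          ultimately show ?thesis by blast
        qed
      qed
      show "F ` {1..k} \<subseteq> (\<lambda>j. (g^^j) b) ` {..<k}"
      proof
        fix y assume "y \<in> F ` {1..k}"
        then obtain i where i: "i \<in> {1..k}" "y = F i" by auto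
        show "y \<in> (\<lambda>j. (g^^j) b) ` {..<k}"
        proof (cases "i = k")
          case True
          then have "y = (g^^0) b" using i fk unfolding F_def by simp
          moreover have "0 \<in> {..<k}" using k0 by simp
          ultimately show ?thesis by blast
        next
          case False
          then have "i < k" "0 < i" using i by auto
          then have "y = (g^^i) b" using i B[of i] unfolding F_def by simp
          moreover have "i \<in> {..<k}" using \<open>i<k\<close> by simp
          ultimately show ?thesis by blast
        qed
      qed
    qed
    finally show ?thesis .
  qed
  have ofa: "orb f a = F ` {..<m}" unfolding F_def by (rule orb_cycle[OF fm m0])
  have injF: "inj_on F {..<m}" unfolding F_def inj_on_def using dist by simp
  have sub1: "{0} \<union> {k<..<m} \<subseteq> {..<m}" and sub2: "{1..k} \<subseteq> {..<m}" using km m0 by auto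
  have "({0} \<union> {k<..<m}) \<inter> {1..k} = {}" by auto
  then show disj: "orb g a \<inter> orb g b = {}"
    unfolding oga ogb using inj_on_image_Int[OF injF sub1 sub2] by simp
  have "({0} \<union> {k<..<m}) \<union> {1..k} = {..<m}" using km by auto
  then show un: "orb g a \<union> orb g b = orb f a"
    unfolding oga ogb ofa by (metis image_Un)
  have Pg: "permon g S" unfolding g_def by (rule permon_sw[OF P aS bS])
  have orb_fb: "orb f b = orb f a" by (rule orb_eq[OF P aS bo])
  show "cycs g S = insert (orb g a) (insert (orb g b) (cycs f S - {orb f a}))"
  proof
    show "cycs g S \<subseteq> insert (orb g a) (insert (orb g b) (cycs f S - {orb f a}))"
    proof
      fix C assume "C \<in> cycs g S"
      then obtain x where x: "x \<in> S" "C = orb g x" unfolding cycs_def by blast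
      show "C \<in> insert (orb g a) (insert (orb g b) (cycs f S - {orb f a}))"
      proof (cases "x \<in> orb f a")
        case True
        then have "x \<in> orb g a \<or> x \<in> orb g b" using un by blast
        then have "orb g x = orb g a \<or> orb g x = orb g b"
          using orb_eq[OF Pg aS] orb_eq[OF Pg bS] by blast
        then show ?thesis using x by blast
      next
        case False
        then have "x \<notin> orb f b" using orb_fb by simp
        then have "orb g x = orb f x"
          unfolding g_def by (rule not_in_orb_agree[OF P aS bS x(1) False])
        moreover have "orb f x \<noteq> orb f a" using False orb_self[of x f] by blast
        moreover have "orb f x \<in> cycs f S" using x unfolding cycs_def by blast
        ultimately show ?thesis using x by auto
      qed
    qed
    show "insert (orb g a) (insert (orb g b) (cycs f S - {orb f a})) \<subseteq> cycs g S"
    proof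
      fix C assume C: "C \<in> insert (orb g a) (insert (orb g b) (cycs f S - {orb f a}))"
      show "C \<in> cycs g S"
      proof (cases "C = orb g a \<or> C = orb g b")
        case True then show ?thesis using aS bS unfolding cycs_def by blast
      next
        case False
        then have "C \<in> cycs f S" "C \<noteq> orb f a" using C by auto
        then obtain x where x: "x \<in> S" "C = orb f x" unfolding cycs_def by blast
        have xa: "x \<notin> orb f a"
        proof
          assume "x \<in> orb f a"
          then have "orb f x = orb f a" by (rule orb_eq[OF P aS])
          then show False using x \<open>C \<noteq> orb f a\<close> by simp
        qed
        then have "x \<notin> orb f b" using orb_fb by simp
        then have "orb g x = orb f x"
          unfolding g_def by (rule not_in_orb_agree[OF P aS bS x(1) xa])
        then show ?thesis using x unfolding cycs_def by blast
      qed
    qed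
  qed
qed


lemma sw_diff:
  assumes P: "permon f S" and aS: "a\<in>S" and bS: "b\<in>S" and ab: "a\<noteq>b" and bo: "b \<notin> orb f a"
  defines "g \<equiv> f \<circ> sw a b"
  shows "orb g a = orb f a \<union> orb f b"
    "cycs g S = insert (orb f a \<union> orb f b) (cycs f S - {orb f a, orb f b})"
proof -
  define m where "m = (LEAST m. 0 < m \<and> (f^^m) a = a)"
  note lp = least_period[OF P aS, folded m_def]
  have m0: "0<m" and fm: "(f^^m) a = a" using lp by auto
  have nfa: "\<And>i. 0<i \<Longrightarrow> i<m \<Longrightarrow> (f^^i) a \<noteq> a" using lp(3) by blast
  define n where "n = (LEAST m. 0 < m \<and> (f^^m) b = b)"
  note lpb = least_period[OF P bS, folded n_def]
  have n0: "0<n" and fn: "(f^^n) b = b" using lpb by auto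
  have nfb: "\<And>i. 0<i \<Longrightarrow> i<n \<Longrightarrow> (f^^i) b \<noteq> b" using lpb(3) by blast
  have ao: "a \<notin> orb f b"
  proof
    assume "a \<in> orb f b"
    then have "b \<in> orb f a" by (rule orb_sym[OF P bS])
    then show False using bo by simp
  qed
  have fab: "\<And>i. (f^^i) a \<noteq> b" using bo orb_funpow[where f=f and x=a] by metis
  have fba: "\<And>i. (f^^i) b \<noteq> a" using ao orb_funpow[where f=f and x=b] by metis
  have gx: "\<And>y. y \<noteq> a \<Longrightarrow> y \<noteq> b \<Longrightarrow> g y = f y" "g a = f b" "g b = f a"
    using ab by (auto simp: g_def sw_def)
  define h where "h = (\<lambda>j. if j = 0 then a else if j \<le> n then (f^^j) b else (f^^(j-n)) a)"
  have H: "(g^^j) a = h j" if "j \<le> n+m" for j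
    using that
  proof (induction j)
    case 0 then show ?case by (simp add: h_def)
  next
    case (Suc j)
    then have IH: "(g^^j) a = h j" by simp
    have st: "(g^^Suc j) a = g (h j)" using IH by simp
    show ?case
    proof (cases "j = 0")
      case True
      then show ?thesis using st n0 by (simp add: h_def gx)
    next
      case j0: False
      show ?thesis
      proof (cases "j < n")
        case True
        then have "h j = (f^^j) b" "(f^^j) b \<noteq> a" "(f^^j) b \<noteq> b" using j0 nfb fba by (auto simp: h_def)
        then show ?thesis using st True by (simp add: h_def gx)
      next
        case False
        show ?thesis
        proof (cases "j = n")
          case True
          then have "h j = b" using fn n0 by (simp add: h_def)
          then show ?thesis using st True by (simp add: h_def gx)
        next
          case False
          then have jn: "n < j" "j - n < m" "0 < j - n" using \<open>\<not> j < n\<close> Suc.prems by auto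
          then have "h j = (f^^(j-n)) a" by (simp add: h_def)
          moreover have "(f^^(j-n)) a \<noteq> a" "(f^^(j-n)) a \<noteq> b" using jn nfa fab by auto
          moreover have "Suc j - n = Suc (j - n)" using jn by simp
          ultimately show ?thesis using st jn by (simp add: h_def gx)
        qed
      qed
    qed
  qed
  have ga: "(g^^(n+m)) a = a" using H[of "n+m"] m0 fm by (simp add: h_def)
  have oga: "orb g a = h ` {..<n+m}"
  proof -
    have "orb g a = (\<lambda>j. (g^^j) a) ` {..<n+m}" by (rule orb_cycle[OF ga]) (use m0 in simp)
    also have "\<dots> = h ` {..<n+m}" using H by (auto intro!: image_cong)
    finally show ?thesis .
  qed
  have ofa: "orb f a = (\<lambda>i. (f^^i) a) ` {..<m}" by (rule orb_cycle[OF fm m0])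
  have ofb: "orb f b = (\<lambda>i. (f^^i) b) ` {..<n}" by (rule orb_cycle[OF fn n0])
  show un: "orb g a = orb f a \<union> orb f b"
  proof
    show "orb g a \<subseteq> orb f a \<union> orb f b"
    proof
      fix y assume "y \<in> orb g a"
      then obtain j where j: "y = h j" unfolding oga by blast
      show "y \<in> orb f a \<union> orb f b"
        using orb_self[of a f] orb_funpow[where f=f and x=a] orb_funpow[where f=f and x=b]
        unfolding j h_def by auto
    qed
    show "orb f a \<union> orb f b \<subseteq> orb g a"
    proof
      fix y assume "y \<in> orb f a \<union> orb f b"
      then show "y \<in> orb g a"
      proof
        assume "y \<in> orb f a"
        then obtain i where i: "i < m" "y = (f^^i) a" unfolding ofa by blast
        show ?thesis
        proof (cases "i = 0")
          case True
          then have "y = h 0" using i by (simp add: h_def)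
          moreover have "0 \<in> {..<n+m}" using m0 by simp
          ultimately show ?thesis unfolding oga by blast
        next
          case False
          then have "y = h (n+i)" using i by (simp add: h_def)
          moreover have "n+i \<in> {..<n+m}" using i by simp
          ultimately show ?thesis unfolding oga by blast
        qed
      next
        assume "y \<in> orb f b"
        then obtain i where i: "i < n" "y = (f^^i) b" unfolding ofb by blast
        show ?thesis
        proof (cases "i = 0")
          case True
          then have "y = h n" using i fn n0 by (simp add: h_def)
          moreover have "n \<in> {..<n+m}" using m0 by simp
          ultimately show ?thesis unfolding oga by blast
        next
          case False
          then have "y = h i" using i by (simp add: h_def)
          moreover have "i \<in> {..<n+m}" using i by simp
          ultimately show ?thesis unfolding oga by blast
        qed
      qed
    qed
  qed
  have Pg: "permon g S" unfolding g_def by (rule permon_sw[OF P aS bS])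
  show "cycs g S = insert (orb f a \<union> orb f b) (cycs f S - {orb f a, orb f b})"
  proof
    show "cycs g S \<subseteq> insert (orb f a \<union> orb f b) (cycs f S - {orb f a, orb f b})"
    proof
      fix C assume "C \<in> cycs g S"
      then obtain x where x: "x \<in> S" "C = orb g x" unfolding cycs_def by blast
      show "C \<in> insert (orb f a \<union> orb f b) (cycs f S - {orb f a, orb f b})"
      proof (cases "x \<in> orb f a \<union> orb f b")
        case True
        then have "x \<in> orb g a" using un by simp
        then have "orb g x = orb g a" by (rule orb_eq[OF Pg aS])
        then show ?thesis using x un by simp
      next
        case False
        then have "orb g x = orb f x"
          unfolding g_def by (intro not_in_orb_agree[OF P aS bS x(1)]) auto
        moreover have "orb f x \<noteq> orb f a" "orb f x \<noteq> orb f b" using False orb_self[of x f] by auto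
        moreover have "orb f x \<in> cycs f S" using x unfolding cycs_def by blast
        ultimately show ?thesis using x by auto
      qed
    qed
    show "insert (orb f a \<union> orb f b) (cycs f S - {orb f a, orb f b}) \<subseteq> cycs g S"
    proof
      fix C assume C: "C \<in> insert (orb f a \<union> orb f b) (cycs f S - {orb f a, orb f b})"
      show "C \<in> cycs g S"
      proof (cases "C = orb f a \<union> orb f b")
        case True then show ?thesis using aS un unfolding cycs_def by blast
      next
        case False
        then have "C \<in> cycs f S" "C \<noteq> orb f a" "C \<noteq> orb f b" using C by auto
        then obtain x where x: "x \<in> S" "C = orb f x" unfolding cycs_def by blast
        have xa: "x \<notin> orb f a"
        proof
          assume "x \<in> orb f a"
          then have "orb f x = orb f a" by (rule orb_eq[OF P aS])
          then show False using x \<open>C \<noteq> orb f a\<close> by simp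
        qed
        have xb: "x \<notin> orb f b"
        proof
          assume "x \<in> orb f b"
          then have "orb f x = orb f b" by (rule orb_eq[OF P bS])
          then show False using x \<open>C \<noteq> orb f b\<close> by simp
        qed
        have "orb g x = orb f x"
          unfolding g_def by (rule not_in_orb_agree[OF P aS bS x(1) xa xb])
        then show ?thesis using x unfolding cycs_def by blast
      qed
    qed
  qed
qed

lemma card_cycs_finite: "permon f S \<Longrightarrow> finite (cycs f S)"
  unfolding cycs_def permon_def by simp

lemma card_same:
  assumes P: "permon f S" and aS: "a\<in>S" and bS: "b\<in>S" and ab: "a\<noteq>b" and bo: "b \<in> orb f a"
  shows "card (cycs (f \<circ> sw a b) S) = card (cycs f S) + 1"
proof -
  let ?g = "f \<circ> sw a b"
  note ss = sw_same[OF P aS bS ab bo]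
  let ?X = "cycs f S"
  have fin: "finite ?X" by (rule card_cycs_finite[OF P])
  have Ca: "orb f a \<in> ?X" using aS unfolding cycs_def by blast
  have ua: "a \<in> orb ?g a" by (rule orb_self)
  have ub: "b \<in> orb ?g b" by (rule orb_self)
  have UW: "orb ?g a \<noteq> orb ?g b" using ss(1) ua by blast
  have Un: "orb ?g a \<notin> ?X - {orb f a}"
  proof
    assume "orb ?g a \<in> ?X - {orb f a}"
    then obtain x where x: "x \<in> S" "orb ?g a = orb f x" "orb f x \<noteq> orb f a" unfolding cycs_def by blast
    have "a \<in> orb f x" using ua x by simp
    then have "orb f a = orb f x" by (rule orb_eq[OF P x(1)])
    then show False using x by simp
  qed
  have Wn: "orb ?g b \<notin> ?X - {orb f a}"
  proof
    assume "orb ?g b \<in> ?X - {orb f a}"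
    then obtain x where x: "x \<in> S" "orb ?g b = orb f x" "orb f x \<noteq> orb f a" unfolding cycs_def by blast
    have "b \<in> orb f x" using ub x by simp
    then have "orb f b = orb f x" by (rule orb_eq[OF P x(1)])
    moreover have "orb f b = orb f a" by (rule orb_eq[OF P aS bo])
    ultimately show False using x by simp
  qed
  have c1: "card (cycs ?g S) = card (insert (orb ?g a) (insert (orb ?g b) (?X - {orb f a})))"
    using ss(3) by simp
  have c1': "card (insert (orb ?g a) (insert (orb ?g b) (?X - {orb f a}))) = Suc (Suc (card (?X - {orb f a})))"
  proof -
    have fin2: "finite (?X - {orb f a})" using fin by simp
    have e1: "card (insert (orb ?g b) (?X - {orb f a})) = Suc (card (?X - {orb f a}))"
      by (rule card_insert_disjoint[OF fin2 Wn])
    have nin: "orb ?g a \<notin> insert (orb ?g b) (?X - {orb f a})"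
    proof
      assume "orb ?g a \<in> insert (orb ?g b) (?X - {orb f a})"
      then consider "orb ?g a = orb ?g b" | "orb ?g a \<in> ?X - {orb f a}" by (rule insertE)
      then show False
      proof cases
        case 1 with UW show False by contradiction
      next
        case 2 with Un show False by contradiction
      qed
    qed
    have "card (insert (orb ?g a) (insert (orb ?g b) (?X - {orb f a}))) = Suc (card (insert (orb ?g b) (?X - {orb f a})))"
      by (rule card_insert_disjoint[OF _ nin]) (use fin2 in simp)
    then show ?thesis using e1 by simp
  qed
  have c2: "card (?X - {orb f a}) = card ?X - 1" using Ca fin by simp
  have c3: "card ?X \<noteq> 0" using Ca fin by auto
  show ?thesis using c1 c1' c2 c3 by simp
qed

lemma card_diff:
  assumes P: "permon f S" and aS: "a\<in>S" and bS: "b\<in>S" and ab: "a\<noteq>b" and bo: "b \<notin> orb f a"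
  shows "card (cycs (f \<circ> sw a b) S) + 1 = card (cycs f S)"
proof -
  let ?g = "f \<circ> sw a b"
  note ss = sw_diff[OF P aS bS ab bo]
  let ?X = "cycs f S"
  have fin: "finite ?X" by (rule card_cycs_finite[OF P])
  have Ca: "orb f a \<in> ?X" and Cb: "orb f b \<in> ?X" using aS bS unfolding cycs_def by blast+
  have AB: "orb f a \<noteq> orb f b" using bo orb_self[of b f] by blast
  have Un: "orb f a \<union> orb f b \<notin> ?X - {orb f a, orb f b}"
  proof
    assume H: "orb f a \<union> orb f b \<in> ?X - {orb f a, orb f b}"
    then have H1: "orb f a \<union> orb f b \<in> orb f ` S" and H2: "orb f a \<union> orb f b \<noteq> orb f a"
      unfolding cycs_def by simp_all
    from H1 obtain x where x: "x \<in> S" "orb f a \<union> orb f b = orb f x" by (rule imageE) simp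
    have "a \<in> orb f a \<union> orb f b" using orb_self[of a f] by simp
    then have "a \<in> orb f x" using x(2) by simp
    then have "orb f a = orb f x" by (rule orb_eq[OF P x(1)])
    then show False using x H2 by simp
  qed
  have c2: "card {orb f a, orb f b} = 2" using AB by simp
  have "card (cycs ?g S) = card (insert (orb f a \<union> orb f b) (?X - {orb f a, orb f b}))"
    using ss(2) by simp
  also have "\<dots> = Suc (card (?X - {orb f a, orb f b}))" using Un fin by simp
  also have "card (?X - {orb f a, orb f b}) = card ?X - card {orb f a, orb f b}"
    by (rule card_Diff_subset) (use Ca Cb in auto)
  also have "card {orb f a, orb f b} = 2" by (rule c2)
  finally have "card (cycs ?g S) = Suc (card ?X - 2)" .
  moreover have "card {orb f a, orb f b} \<le> card ?X"
    by (rule card_mono[OF fin]) (use Ca Cb in auto)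
  ultimately show ?thesis using c2 by simp
qed

lemma orb_cong:
  assumes "\<And>x. x \<in> S \<Longrightarrow> f x = g x" "permon f S" "x \<in> S"
  shows "orb f x = orb g x"
proof -
  have "(f^^n) x = (g^^n) x" for n
  proof (induction n)
    case 0 show ?case by simp
  next
    case (Suc n)
    have "(f^^n) x \<in> S" by (rule permon_funpow_in[OF assms(2,3)])
    then show ?case using Suc assms(1) by simp
  qed
  then show ?thesis unfolding orb_def by simp
qed

lemma cycs_cong:
  assumes "\<And>x. x \<in> S \<Longrightarrow> f x = g x" "permon f S"
  shows "cycs f S = cycs g S"
  unfolding cycs_def using orb_cong[OF assms] by simp

lemma permon_cong:
  assumes eq: "\<And>x. x \<in> S \<Longrightarrow> f x = g x" and P: "permon f S"
  shows "permon g S"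
  unfolding permon_def
proof (intro conjI)
  show "finite S" using P unfolding permon_def by blast
  show "g ` S \<subseteq> S"
  proof
    fix y assume "y \<in> g ` S"
    then obtain x where "x \<in> S" "y = g x" by blast
    then have "y = f x" using eq by simp
    then show "y \<in> S" using P \<open>x \<in> S\<close> unfolding permon_def by blast
  qed
  show "inj_on g S"
  proof (rule inj_onI)
    fix x y assume "x \<in> S" "y \<in> S" "g x = g y"
    then have "f x = f y" using eq by simp
    then show "x = y" using P \<open>x \<in> S\<close> \<open>y \<in> S\<close> unfolding permon_def inj_on_def by blast
  qed
qed

definition dmap :: "'a set \<Rightarrow> ('a \<Rightarrow> 'a) \<Rightarrow> ('a \<Rightarrow> 'a) \<Rightarrow> ('a \<Rightarrow> 'e) \<Rightarrow> bool" where
  "dmap S sg al ed \<longleftrightarrow> permon sg S \<and> (\<forall>x\<in>S. al x \<in> S \<and> al (al x) = x \<and> al x \<noteq> x \<and> ed (al x) = ed x) \<and>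
     (\<forall>x\<in>S. \<forall>y\<in>S. ed x = ed y \<longrightarrow> y = x \<or> y = al x)"

definition aT :: "'a set \<Rightarrow> ('a \<Rightarrow> 'a) \<Rightarrow> ('a \<Rightarrow> 'e) \<Rightarrow> 'e set \<Rightarrow> 'a \<Rightarrow> 'a" where
  "aT S al ed T x = (if x \<in> S \<and> ed x \<in> T then al x else x)"

lemma dmapD:
  assumes "dmap S sg al ed"
  shows "permon sg S" "\<And>x. x\<in>S \<Longrightarrow> al x \<in> S" "\<And>x. x\<in>S \<Longrightarrow> al (al x) = x"
    "\<And>x. x\<in>S \<Longrightarrow> al x \<noteq> x" "\<And>x. x\<in>S \<Longrightarrow> ed (al x) = ed x"
    "\<And>x y. x\<in>S \<Longrightarrow> y\<in>S \<Longrightarrow> ed x = ed y \<Longrightarrow> y = x \<or> y = al x"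
  using assms unfolding dmap_def by blast+

lemma aT_in: assumes "dmap S sg al ed" "x \<in> S" shows "aT S al ed T x \<in> S"
  unfolding aT_def using dmapD(2)[OF assms] assms(2) by simp

lemma aT_inv: assumes "dmap S sg al ed" "x \<in> S" shows "aT S al ed T (aT S al ed T x) = x"
  unfolding aT_def using dmapD(2,3,5)[OF assms(1) assms(2)] assms(2) by simp

lemma aT_permon:
  assumes D: "dmap S sg al ed"
  shows "permon (sg \<circ> aT S al ed T) S"
  unfolding permon_def
proof (intro conjI)
  have ps: "permon sg S" by (rule dmapD(1)[OF D])
  then show "finite S" unfolding permon_def by blast
  show "(sg \<circ> aT S al ed T) ` S \<subseteq> S"
  proof
    fix y assume "y \<in> (sg \<circ> aT S al ed T) ` S"
    then obtain x where "x \<in> S" "y = sg (aT S al ed T x)" by auto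
    then show "y \<in> S" using aT_in[OF D \<open>x \<in> S\<close>, of T] ps unfolding permon_def by blast
  qed
  show "inj_on (sg \<circ> aT S al ed T) S"
  proof (rule inj_onI)
    fix x y assume xy: "x \<in> S" "y \<in> S" "(sg \<circ> aT S al ed T) x = (sg \<circ> aT S al ed T) y"
    then have "aT S al ed T x = aT S al ed T y"
      using aT_in[OF D xy(1), of T] aT_in[OF D xy(2), of T] ps unfolding permon_def inj_on_def by simp
    then have "aT S al ed T (aT S al ed T x) = aT S al ed T (aT S al ed T y)" by simp
    then show "x = y" using aT_inv[OF D xy(1)] aT_inv[OF D xy(2)] by simp
  qed
qed

definition good :: "'a set \<Rightarrow> ('a \<Rightarrow> 'a) \<Rightarrow> ('a \<Rightarrow> 'a) \<Rightarrow> ('a \<Rightarrow> 'e) \<Rightarrow> 'e set \<Rightarrow> 'a set set \<Rightarrow> bool" where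
  "good S sg al ed T P \<longleftrightarrow>
     (\<forall>B\<in>P. B \<noteq> {} \<and> B \<subseteq> S \<and> (\<forall>x\<in>B. sg x \<in> B \<and> aT S al ed T x \<in> B)) \<and>
     (\<forall>B1\<in>P. \<forall>B2\<in>P. B1 \<noteq> B2 \<longrightarrow> B1 \<inter> B2 = {}) \<and> \<Union>P = S \<and>
     (\<forall>C\<in>cycs (sg \<circ> aT S al ed T) S. \<exists>B\<in>P. C \<subseteq> B) \<and>
     card (cycs sg S) + card (cycs (sg \<circ> aT S al ed T) S) \<le> 2 * card P + card T"

lemma aT_ins_pt:
  assumes D: "dmap S sg al ed" and x0: "x0 \<in> S" and nT: "ed x0 \<notin> T"
  shows "aT S al ed (insert (ed x0) T) y =
           (if y = x0 then al x0 else if y = al x0 then x0 else aT S al ed T y)"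
proof -
  have a1: "al x0 \<in> S" "al (al x0) = x0" "al x0 \<noteq> x0" "ed (al x0) = ed x0"
    using dmapD(2,3,4,5)[OF D x0] by auto
  have edu: "\<And>y. y \<in> S \<Longrightarrow> ed x0 = ed y \<Longrightarrow> y = x0 \<or> y = al x0"
    using dmapD(6)[OF D x0] by blast
  show ?thesis
  proof (cases "y = x0")
    case True then show ?thesis using x0 unfolding aT_def by simp
  next
    case False
    show ?thesis
    proof (cases "y = al x0")
      case True then show ?thesis using a1 False unfolding aT_def by simp
    next
      case False2: False
      have "\<not> (y \<in> S \<and> ed y = ed x0)" using edu False False2 by metis
      then show ?thesis using False False2 unfolding aT_def by auto
    qed
  qed
qed

lemma aT_fix:
  assumes D: "dmap S sg al ed" and x0: "x0 \<in> S" and nT: "ed x0 \<notin> T"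
  shows "aT S al ed T x0 = x0" "aT S al ed T (al x0) = al x0"
  using nT dmapD(5)[OF D x0] unfolding aT_def by auto

lemma aT_ins_comp:
  assumes D: "dmap S sg al ed" and x0: "x0 \<in> S" and nT: "ed x0 \<notin> T"
  shows "sg \<circ> aT S al ed (insert (ed x0) T) = (sg \<circ> aT S al ed T) \<circ> sw x0 (al x0)"
proof
  fix y
  have ne: "al x0 \<noteq> x0" using dmapD(4)[OF D x0] .
  show "(sg \<circ> aT S al ed (insert (ed x0) T)) y = ((sg \<circ> aT S al ed T) \<circ> sw x0 (al x0)) y"
    using aT_ins_pt[OF D x0 nT, of y] aT_fix[OF D x0 nT] ne unfolding sw_def by auto
qed

lemma good_empty:
  assumes D: "dmap S sg al ed"
  shows "good S sg al ed {} (cycs sg S)"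
proof -
  have Ps: "permon sg S" by (rule dmapD(1)[OF D])
  have aT0: "aT S al ed {} x = x" for x unfolding aT_def by simp
  have comp: "sg \<circ> aT S al ed {} = sg" using aT0 by (simp add: fun_eq_iff)
  have b1: "\<forall>B\<in>cycs sg S. B \<noteq> {} \<and> B \<subseteq> S \<and> (\<forall>x\<in>B. sg x \<in> B \<and> aT S al ed {} x \<in> B)"
  proof
    fix B assume "B \<in> cycs sg S"
    then obtain x where x: "x \<in> S" "B = orb sg x" unfolding cycs_def by blast
    have "x \<in> B" using x orb_self by metis
    moreover have "B \<subseteq> S" using orb_subset[OF Ps x(1)] x by simp
    moreover have "\<forall>y\<in>B. sg y \<in> B \<and> aT S al ed {} y \<in> B" using orb_step x(2) aT0 by metis
    ultimately show "B \<noteq> {} \<and> B \<subseteq> S \<and> (\<forall>x\<in>B. sg x \<in> B \<and> aT S al ed {} x \<in> B)" by blast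
  qed
  have b2: "\<forall>B1\<in>cycs sg S. \<forall>B2\<in>cycs sg S. B1 \<noteq> B2 \<longrightarrow> B1 \<inter> B2 = {}"
  proof (intro ballI impI)
    fix B1 B2 assume "B1 \<in> cycs sg S" "B2 \<in> cycs sg S" "B1 \<noteq> B2"
    then obtain x y where xy: "x \<in> S" "B1 = orb sg x" "y \<in> S" "B2 = orb sg y" unfolding cycs_def by blast
    show "B1 \<inter> B2 = {}"
    proof (rule ccontr)
      assume "B1 \<inter> B2 \<noteq> {}"
      then obtain z where "z \<in> orb sg x" "z \<in> orb sg y" using xy by blast
      then have "orb sg x = orb sg y" by (rule orb_disj[OF Ps xy(1) xy(3)])
      then show False using xy \<open>B1 \<noteq> B2\<close> by simp
    qed
  qed
  have b3: "\<Union>(cycs sg S) = S"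
  proof
    show "\<Union>(cycs sg S) \<subseteq> S" using b1 by blast
    show "S \<subseteq> \<Union>(cycs sg S)"
    proof
      fix x assume "x \<in> S"
      then have "orb sg x \<in> cycs sg S" unfolding cycs_def by blast
      then show "x \<in> \<Union>(cycs sg S)" using orb_self[of x sg] by blast
    qed
  qed
  show ?thesis unfolding good_def comp using b1 b2 b3 by auto
qed


lemma goodI:
  assumes "\<And>B. B\<in>P \<Longrightarrow> B \<noteq> {}" "\<And>B. B\<in>P \<Longrightarrow> B \<subseteq> S"
    "\<And>B x. B\<in>P \<Longrightarrow> x\<in>B \<Longrightarrow> sg x \<in> B" "\<And>B x. B\<in>P \<Longrightarrow> x\<in>B \<Longrightarrow> aT S al ed T x \<in> B"
    "\<And>B1 B2. B1\<in>P \<Longrightarrow> B2\<in>P \<Longrightarrow> B1 \<noteq> B2 \<Longrightarrow> B1 \<inter> B2 = {}" "\<Union>P = S"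
    "\<And>C. C \<in> cycs (sg \<circ> aT S al ed T) S \<Longrightarrow> \<exists>B\<in>P. C \<subseteq> B"
    "card (cycs sg S) + card (cycs (sg \<circ> aT S al ed T) S) \<le> 2*card P + card T"
  shows "good S sg al ed T P"
  unfolding good_def
proof (intro conjI)
  show "\<forall>B\<in>P. B \<noteq> {} \<and> B \<subseteq> S \<and> (\<forall>x\<in>B. sg x \<in> B \<and> aT S al ed T x \<in> B)"
    using assms(1-4) by simp
  show "\<forall>B1\<in>P. \<forall>B2\<in>P. B1 \<noteq> B2 \<longrightarrow> B1 \<inter> B2 = {}" using assms(5) by simp
  show "\<Union>P = S" by (rule assms(6))
  show "\<forall>C\<in>cycs (sg \<circ> aT S al ed T) S. \<exists>B\<in>P. C \<subseteq> B" using assms(7) by simp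
  show "card (cycs sg S) + card (cycs (sg \<circ> aT S al ed T) S) \<le> 2*card P + card T" by (rule assms(8))
qed

lemma goodD:
  assumes "good S sg al ed T P"
  shows "\<And>B. B\<in>P \<Longrightarrow> B \<noteq> {}" "\<And>B. B\<in>P \<Longrightarrow> B \<subseteq> S"
    "\<And>B x. B\<in>P \<Longrightarrow> x\<in>B \<Longrightarrow> sg x \<in> B" "\<And>B x. B\<in>P \<Longrightarrow> x\<in>B \<Longrightarrow> aT S al ed T x \<in> B"
    "\<And>B1 B2. B1\<in>P \<Longrightarrow> B2\<in>P \<Longrightarrow> B1 \<noteq> B2 \<Longrightarrow> B1 \<inter> B2 = {}" "\<Union>P = S"
    "\<And>C. C \<in> cycs (sg \<circ> aT S al ed T) S \<Longrightarrow> \<exists>B\<in>P. C \<subseteq> B"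
    "card (cycs sg S) + card (cycs (sg \<circ> aT S al ed T) S) \<le> 2*card P + card T"
proof -
  note H = assms[unfolded good_def]
  note H1 = H[THEN conjunct1] and H2 = H[THEN conjunct2, THEN conjunct1]
    and H3 = H[THEN conjunct2, THEN conjunct2, THEN conjunct1]
    and H4 = H[THEN conjunct2, THEN conjunct2, THEN conjunct2, THEN conjunct1]
    and H5 = H[THEN conjunct2, THEN conjunct2, THEN conjunct2, THEN conjunct2]
  show "\<And>B. B\<in>P \<Longrightarrow> B \<noteq> {}" using H1 by simp
  show "\<And>B. B\<in>P \<Longrightarrow> B \<subseteq> S" using H1 by simp
  show "\<And>B x. B\<in>P \<Longrightarrow> x\<in>B \<Longrightarrow> sg x \<in> B" using H1 by simp
  show "\<And>B x. B\<in>P \<Longrightarrow> x\<in>B \<Longrightarrow> aT S al ed T x \<in> B" using H1 by simp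
  show "\<And>B1 B2. B1\<in>P \<Longrightarrow> B2\<in>P \<Longrightarrow> B1 \<noteq> B2 \<Longrightarrow> B1 \<inter> B2 = {}" using H2 by simp
  show "\<Union>P = S" by (rule H3)
  show "\<And>C. C \<in> cycs (sg \<circ> aT S al ed T) S \<Longrightarrow> \<exists>B\<in>P. C \<subseteq> B" using H4 by simp
  show "card (cycs sg S) + card (cycs (sg \<circ> aT S al ed T) S) \<le> 2*card P + card T" by (rule H5)
qed

lemma genus_step:
  assumes D: "dmap S sg al ed" and G: "good S sg al ed T P" and finT: "finite T"
    and x0: "x0 \<in> S" and nT: "ed x0 \<notin> T"
  shows "\<exists>P'. good S sg al ed (insert (ed x0) T) P'"
proof -
  define b where "b = al x0"
  define pi where "pi = sg \<circ> aT S al ed T"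
  define pi' where "pi' = sg \<circ> aT S al ed (insert (ed x0) T)"
  have Pp: "permon pi S" unfolding pi_def by (rule aT_permon[OF D])
  have comp: "pi' = pi \<circ> sw x0 b" unfolding pi_def pi'_def b_def by (rule aT_ins_comp[OF D x0 nT])
  have bS: "b \<in> S" unfolding b_def by (rule dmapD(2)[OF D x0])
  have ab: "x0 \<noteq> b" unfolding b_def using dmapD(4)[OF D x0] by metis
  have Psg: "permon sg S" by (rule dmapD(1)[OF D])
  note g = goodD[OF G, folded pi_def]
  have blk: "\<And>y. y\<in>S \<Longrightarrow> \<exists>B\<in>P. y\<in>B" using g(6) by blast
  have uniq: "\<And>B1 B2 y. B1\<in>P \<Longrightarrow> B2\<in>P \<Longrightarrow> y\<in>B1 \<Longrightarrow> y\<in>B2 \<Longrightarrow> B1 = B2"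
    using g(5) by blast
  have aTi: "\<And>y. aT S al ed (insert (ed x0) T) y = (if y = x0 then b else if y = b then x0 else aT S al ed T y)"
    unfolding b_def by (rule aT_ins_pt[OF D x0 nT])
  have cT: "card (insert (ed x0) T) = card T + 1" using finT nT by simp
  have closeP: "aT S al ed (insert (ed x0) T) y \<in> B"
    if "B \<in> P" "y \<in> B" "x0 \<in> B \<longleftrightarrow> b \<in> B" for B y
  proof (cases "y = x0")
    case True
    then have "b \<in> B" using that by simp
    then show ?thesis using aTi[of y] True by simp
  next
    case False
    show ?thesis
    proof (cases "y = b")
      case True
      then have "x0 \<in> B" using that by simp
      then show ?thesis using aTi[of y] True by simp
    next
      case False2: False
      then show ?thesis using aTi[of y] False g(4)[OF that(1,2)] by simp
    qed
  qed
  have inc: "\<exists>B\<in>P. C \<subseteq> B" if "C \<in> cycs pi S" for C using g(7) that by blast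
  have Ain: "orb pi x0 \<in> cycs pi S" "orb pi b \<in> cycs pi S" using x0 bS unfolding cycs_def by blast+
  have cyc_sub: "orb pi y \<subseteq> B" if "y \<in> S" "B \<in> P" "y \<in> B" for y B
  proof -
    have "orb pi y \<in> cycs pi S" using that(1) unfolding cycs_def by blast
    then obtain B' where B': "B' \<in> P" "orb pi y \<subseteq> B'" using inc by blast
    have "y \<in> B'" using B'(2) orb_self[of y pi] by blast
    then have "B' = B" using uniq[OF B'(1) that(2)] that(3) by blast
    then show ?thesis using B' by simp
  qed
  obtain Ba where Ba: "Ba \<in> P" "x0 \<in> Ba" using blk[OF x0] by blast
  obtain Bb where Bb: "Bb \<in> P" "b \<in> Bb" using blk[OF bS] by blast
  have Asub: "orb pi x0 \<subseteq> Ba" by (rule cyc_sub[OF x0 Ba])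
  have Bsub: "orb pi b \<subseteq> Bb" by (rule cyc_sub[OF bS Bb])
  show ?thesis
  proof (cases "b \<in> orb pi x0")
    case True
    note ss = sw_same[OF Pp x0 bS ab True, folded comp]
    have cs: "card (cycs pi' S) = card (cycs pi S) + 1"
      using card_same[OF Pp x0 bS ab True] comp by simp
    have bBa: "b \<in> Ba" using True Asub by blast
    have iff: "x0 \<in> B \<longleftrightarrow> b \<in> B" if "B \<in> P" for B
      using uniq[OF that Ba(1)] bBa Ba(2) by blast
    have "good S sg al ed (insert (ed x0) T) P"
    proof (rule goodI)
      show "\<And>B. B\<in>P \<Longrightarrow> B \<noteq> {}" "\<And>B. B\<in>P \<Longrightarrow> B \<subseteq> S"
        "\<And>B x. B\<in>P \<Longrightarrow> x\<in>B \<Longrightarrow> sg x \<in> B" using g(1,2,3) by auto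
      show "\<And>B x. B\<in>P \<Longrightarrow> x\<in>B \<Longrightarrow> aT S al ed (insert (ed x0) T) x \<in> B"
        using closeP iff by blast
      show "\<And>B1 B2. B1\<in>P \<Longrightarrow> B2\<in>P \<Longrightarrow> B1 \<noteq> B2 \<Longrightarrow> B1 \<inter> B2 = {}" "\<Union>P = S"
        using g(5,6) by auto
      show "\<exists>B\<in>P. C \<subseteq> B" if "C \<in> cycs (sg \<circ> aT S al ed (insert (ed x0) T)) S" for C
      proof -
        have C: "C \<in> insert (orb pi' x0) (insert (orb pi' b) (cycs pi S - {orb pi x0}))"
          using that ss(3) unfolding pi'_def by simp
        show ?thesis
        proof (cases "C = orb pi' x0 \<or> C = orb pi' b")
          case True
          then have "C \<subseteq> orb pi x0" using ss(2) by blast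
          then show ?thesis using Asub Ba(1) by blast
        next
          case False
          then have "C \<in> cycs pi S" using C by blast
          then show ?thesis by (rule inc)
        qed
      qed
      show "card (cycs sg S) + card (cycs (sg \<circ> aT S al ed (insert (ed x0) T)) S) \<le> 2*card P + card (insert (ed x0) T)"
        using g(8) cs cT unfolding pi'_def by simp
    qed
    then show ?thesis by blast
  next
    case False
    note ss = sw_diff[OF Pp x0 bS ab False, folded comp]
    have cs: "card (cycs pi' S) + 1 = card (cycs pi S)"
      using card_diff[OF Pp x0 bS ab False] comp by simp
    have ncyc: "\<exists>B. B \<in> Q \<and> C \<subseteq> B"
      if "C \<in> cycs pi' S" "\<And>B. B \<in> P \<Longrightarrow> B \<noteq> Ba \<Longrightarrow> B \<noteq> Bb \<Longrightarrow> B \<in> Q" "Ba \<union> Bb \<subseteq> M" "M \<in> Q"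
      for C Q M
    proof -
      have C: "C \<in> insert (orb pi x0 \<union> orb pi b) (cycs pi S - {orb pi x0, orb pi b})"
        using that(1) ss(2) by simp
      show ?thesis
      proof (cases "C = orb pi x0 \<union> orb pi b")
        case True
        then have "C \<subseteq> M" using Asub Bsub that(3) by blast
        then show ?thesis using that(4) by blast
      next
        case False
        then have "C \<in> cycs pi S" using C by blast
        then obtain B where B: "B \<in> P" "C \<subseteq> B" using inc by blast
        show ?thesis
        proof (cases "B = Ba \<or> B = Bb")
          case True
          then have "C \<subseteq> M" using B that(3) by blast
          then show ?thesis using that(4) by blast
        next
          case False
          then show ?thesis using B that(2) by blast
        qed
      qed
    qed
    show ?thesis
    proof (cases "Ba = Bb")
      case True
      have iff: "x0 \<in> B \<longleftrightarrow> b \<in> B" if "B \<in> P" for B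
        using uniq[OF that Ba(1)] uniq[OF that Bb(1)] Ba(2) Bb(2) True by blast
      have "good S sg al ed (insert (ed x0) T) P"
      proof (rule goodI)
        show "\<And>B. B\<in>P \<Longrightarrow> B \<noteq> {}" "\<And>B. B\<in>P \<Longrightarrow> B \<subseteq> S"
          "\<And>B x. B\<in>P \<Longrightarrow> x\<in>B \<Longrightarrow> sg x \<in> B" using g(1,2,3) by auto
        show "\<And>B x. B\<in>P \<Longrightarrow> x\<in>B \<Longrightarrow> aT S al ed (insert (ed x0) T) x \<in> B"
          using closeP iff by blast
        show "\<And>B1 B2. B1\<in>P \<Longrightarrow> B2\<in>P \<Longrightarrow> B1 \<noteq> B2 \<Longrightarrow> B1 \<inter> B2 = {}" "\<Union>P = S"
          using g(5,6) by auto
        show "\<exists>B\<in>P. C \<subseteq> B" if "C \<in> cycs (sg \<circ> aT S al ed (insert (ed x0) T)) S" for C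
        proof -
          have "\<exists>B. B \<in> P \<and> C \<subseteq> B"
            by (rule ncyc[of C P Ba]) (use that True Ba(1) in \<open>auto simp: pi'_def\<close>)
          then show ?thesis by blast
        qed
        show "card (cycs sg S) + card (cycs (sg \<circ> aT S al ed (insert (ed x0) T)) S) \<le> 2*card P + card (insert (ed x0) T)"
          using g(8) cs cT unfolding pi'_def by simp
      qed
      then show ?thesis by blast
    next
      case neq: False
      define P' where "P' = insert (Ba \<union> Bb) (P - {Ba, Bb})"
      have finP: "finite P"
      proof -
        have "P \<subseteq> Pow S" using g(2) by blast
        moreover have "finite S" using Psg unfolding permon_def by blast
        ultimately show ?thesis by (rule finite_subset[OF _ finite_Pow_iff[THEN iffD2]])
      qed
      have nin: "Ba \<union> Bb \<notin> P - {Ba, Bb}"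
      proof
        assume H: "Ba \<union> Bb \<in> P - {Ba, Bb}"
        then have "Ba \<union> Bb \<in> P" "Ba \<union> Bb \<noteq> Ba" by auto
        moreover have "x0 \<in> Ba \<union> Bb" using Ba(2) by blast
        ultimately show False using uniq[OF _ Ba(1)] Ba(2) by blast
      qed
      have c2: "card {Ba, Bb} = 2" using neq by simp
      have cP: "card P' + 1 = card P"
      proof -
        have "card P' = Suc (card (P - {Ba, Bb}))" unfolding P'_def using nin finP by simp
        also have "card (P - {Ba, Bb}) = card P - card {Ba, Bb}"
          by (rule card_Diff_subset) (use Ba Bb in auto)
        finally have "card P' = Suc (card P - 2)" using c2 by simp
        moreover have "card {Ba, Bb} \<le> card P" by (rule card_mono[OF finP]) (use Ba Bb in auto)
        ultimately show ?thesis using c2 by simp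
      qed
      have dBa: "B \<inter> Ba = {}" "B \<inter> Bb = {}" if "B \<in> P" "B \<noteq> Ba" "B \<noteq> Bb" for B
        using g(5)[OF that(1) Ba(1) that(2)] g(5)[OF that(1) Bb(1) that(3)] by auto
      have "good S sg al ed (insert (ed x0) T) P'"
      proof (rule goodI)
        show "B \<noteq> {}" if "B \<in> P'" for B using that g(1) Ba unfolding P'_def by auto
        show "B \<subseteq> S" if "B \<in> P'" for B using that g(2) Ba Bb unfolding P'_def by auto
        show "sg x \<in> B" if "B \<in> P'" "x \<in> B" for B x
          using that g(3) Ba Bb unfolding P'_def by blast
        show "aT S al ed (insert (ed x0) T) x \<in> B" if "B \<in> P'" "x \<in> B" for B x
        proof (cases "B = Ba \<union> Bb")
          case True
          then show ?thesis using that(2) aTi[of x] g(4) Ba Bb by auto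
        next
          case False
          then have B: "B \<in> P" "B \<noteq> Ba" "B \<noteq> Bb" using that(1) unfolding P'_def by auto
          have "x0 \<notin> B" "b \<notin> B" using dBa[OF B] Ba(2) Bb(2) by blast+
          then show ?thesis using closeP[OF B(1) that(2)] by blast
        qed
        show "B1 \<inter> B2 = {}" if "B1 \<in> P'" "B2 \<in> P'" "B1 \<noteq> B2" for B1 B2
        proof (cases "B1 = Ba \<union> Bb")
          case True
          then have "B2 \<in> P" "B2 \<noteq> Ba" "B2 \<noteq> Bb" using that unfolding P'_def by auto
          then show ?thesis using dBa True by blast
        next
          case False
          then have B1: "B1 \<in> P" "B1 \<noteq> Ba" "B1 \<noteq> Bb" using that(1) unfolding P'_def by auto
          show ?thesis
          proof (cases "B2 = Ba \<union> Bb")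
            case True then show ?thesis using dBa[OF B1] by blast
          next
            case False
            then have "B2 \<in> P" using that(2) unfolding P'_def by auto
            then show ?thesis using g(5)[OF B1(1) _ that(3)] by blast
          qed
        qed
        show "\<Union>P' = S"
        proof -
          have "\<Union>P' = \<Union>P" unfolding P'_def using Ba(1) Bb(1) by blast
          then show ?thesis using g(6) by simp
        qed
        show "\<exists>B\<in>P'. C \<subseteq> B" if "C \<in> cycs (sg \<circ> aT S al ed (insert (ed x0) T)) S" for C
        proof -
          have "\<exists>B. B \<in> P' \<and> C \<subseteq> B"
            by (rule ncyc[of C P' "Ba \<union> Bb"]) (use that in \<open>auto simp: pi'_def P'_def\<close>)
          then show ?thesis by blast
        qed
        show "card (cycs sg S) + card (cycs (sg \<circ> aT S al ed (insert (ed x0) T)) S) \<le> 2*card P' + card (insert (ed x0) T)"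
          using g(8) cs cT cP unfolding pi'_def by simp
      qed
      then show ?thesis by blast
    qed
  qed
qed

lemma genus_ind:
  assumes D: "dmap S sg al ed"
  shows "finite T \<Longrightarrow> T \<subseteq> ed ` S \<Longrightarrow> \<exists>P. good S sg al ed T P"
proof (induction T rule: finite_induct)
  case empty
  show ?case using good_empty[OF D] by blast
next
  case (insert e T)
  then obtain x0 where x0: "x0 \<in> S" "e = ed x0" by blast
  have "T \<subseteq> ed ` S" using insert.prems by simp
  then obtain P where P: "good S sg al ed T P" using insert.IH by blast
  have "ed x0 \<notin> T" using insert.hyps(2) x0(2) by simp
  then show ?case using genus_step[OF D P insert.hyps(1) x0(1)] x0(2) by simp
qed

lemma aT_all: "x \<in> S \<Longrightarrow> aT S al ed (ed ` S) x = al x"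
  unfolding aT_def by simp

lemma permon_phi:
  assumes D: "dmap S sg al ed"
  shows "permon (sg \<circ> al) S"
proof (rule permon_cong[OF _ aT_permon[OF D, of "ed ` S"]])
  fix x assume "x \<in> S"
  then show "(sg \<circ> aT S al ed (ed ` S)) x = (sg \<circ> al) x" using aT_all[where x=x and S=S and al=al and ed=ed, OF \<open>x \<in> S\<close>] by simp
qed

lemma genus_blocks:
  assumes D: "dmap S sg al ed"
    and big: "card (cycs sg S) + card (cycs (sg \<circ> al) S) > card (ed ` S) + 2"
  shows "\<exists>B1 B2. B1 \<noteq> B2 \<and> B1 \<noteq> {} \<and> B2 \<noteq> {} \<and> B1 \<subseteq> S \<and> B2 \<subseteq> S \<and>
     (\<forall>x\<in>B1. sg x \<in> B1 \<and> al x \<in> B1) \<and> (\<forall>x\<in>B2. sg x \<in> B2 \<and> al x \<in> B2)"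
proof -
  have Ps: "permon sg S" by (rule dmapD(1)[OF D])
  have finS: "finite S" using Ps unfolding permon_def by blast
  obtain P where P: "good S sg al ed (ed ` S) P" using genus_ind[OF D] finS by blast
  note g = goodD[OF P]
  have ceq: "cycs (sg \<circ> aT S al ed (ed ` S)) S = cycs (sg \<circ> al) S"
    by (rule cycs_cong[OF _ aT_permon[OF D]]) (simp add: aT_all[where S=S and al=al and ed=ed])
  have "card (cycs sg S) + card (cycs (sg \<circ> al) S) \<le> 2 * card P + card (ed ` S)"
    using g(8) ceq by simp
  then have c2: "card P \<ge> 2" using big by simp
  have finP: "finite P"
  proof -
    have "P \<subseteq> Pow S" using g(2) by blast
    then show ?thesis using finS by (simp add: finite_subset)
  qed
  have "P \<noteq> {}" using c2 by auto
  then obtain B1 where B1: "B1 \<in> P" by blast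
  have "card (P - {B1}) = card P - 1" using B1 finP by simp
  then have "card (P - {B1}) \<noteq> 0" using c2 by simp
  then have "P - {B1} \<noteq> {}" by (metis card.empty)
  then obtain B2 where B2: "B2 \<in> P" "B2 \<noteq> B1" by blast
  have aTe: "\<And>x. x \<in> S \<Longrightarrow> aT S al ed (ed ` S) x = al x" by (rule aT_all[where S=S and al=al and ed=ed])
  have cl: "\<forall>x\<in>B. sg x \<in> B \<and> al x \<in> B" if "B \<in> P" for B
  proof
    fix x assume "x \<in> B"
    then have "x \<in> S" using g(2)[OF that] by blast
    then show "sg x \<in> B \<and> al x \<in> B" using g(3)[OF that \<open>x \<in> B\<close>] g(4)[OF that \<open>x \<in> B\<close>] aTe by simp
  qed
  show ?thesis
    apply (rule exI[of _ B1], rule exI[of _ B2])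
    using B1 B2 g(1)[OF B1] g(1)[OF B2(1)] g(2)[OF B1] g(2)[OF B2(1)] cl[OF B1] cl[OF B2(1)] by simp
qed

lemma split_blocks:
  assumes D: "dmap S sg al ed" and e1: "e1 \<in> S" and e2: "e2 \<in> S" and ne: "e1 \<noteq> e2"
    and o1: "e2 \<in> orb sg e1" and o2: "al e2 \<in> orb (sg \<circ> al) (al e1)"
    and eul: "card (cycs sg S) + card (cycs (sg \<circ> al) S) = card (ed ` S) + 2"
  shows "\<exists>B1 B2. B1 \<noteq> B2 \<and> B1 \<noteq> {} \<and> B2 \<noteq> {} \<and> B1 \<subseteq> S \<and> B2 \<subseteq> S \<and>
     (\<forall>x\<in>B1. (sg \<circ> sw e1 e2) x \<in> B1 \<and> al x \<in> B1) \<and> (\<forall>x\<in>B2. (sg \<circ> sw e1 e2) x \<in> B2 \<and> al x \<in> B2)"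
proof (rule genus_blocks)
  have Ps: "permon sg S" by (rule dmapD(1)[OF D])
  have Ps': "permon (sg \<circ> sw e1 e2) S" by (rule permon_sw[OF Ps e1 e2])
  show D': "dmap S (sg \<circ> sw e1 e2) al ed" using D Ps' unfolding dmap_def by blast
  have c1: "card (cycs (sg \<circ> sw e1 e2) S) = card (cycs sg S) + 1"
    by (rule card_same[OF Ps e1 e2 ne o1])
  have Pphi: "permon (sg \<circ> al) S" by (rule permon_phi[OF D])
  have a1: "al e1 \<in> S" "al e2 \<in> S" using dmapD(2)[OF D] e1 e2 by auto
  have ane: "al e1 \<noteq> al e2" using dmapD(3)[OF D] e1 e2 ne by metis
  have c2: "card (cycs ((sg \<circ> al) \<circ> sw (al e1) (al e2)) S) = card (cycs (sg \<circ> al) S) + 1"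
    by (rule card_same[OF Pphi a1 ane o2])
  have eqS: "((sg \<circ> al) \<circ> sw (al e1) (al e2)) x = ((sg \<circ> sw e1 e2) \<circ> al) x" if "x \<in> S" for x
  proof -
    have "al (sw (al e1) (al e2) x) = sw e1 e2 (al x)"
      using dmapD(3)[OF D] that e1 e2 ane unfolding sw_def by auto
    then show ?thesis by simp
  qed
  have c3: "cycs ((sg \<circ> al) \<circ> sw (al e1) (al e2)) S = cycs ((sg \<circ> sw e1 e2) \<circ> al) S"
    by (rule cycs_cong[OF eqS permon_sw[OF Pphi a1]])
  show "card (ed ` S) + 2 < card (cycs (sg \<circ> sw e1 e2) S) + card (cycs (sg \<circ> sw e1 e2 \<circ> al) S)"
    using c1 c2 c3 eul by (simp add: comp_assoc)
qed

definition sgr :: "('v \<Rightarrow> 'v \<Rightarrow> 'v) \<Rightarrow> 'v \<times> 'v \<Rightarrow> 'v \<times> 'v" where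
  "sgr rot d = (fst d, rot (fst d) (snd d))"
definition alp :: "'v \<times> 'v \<Rightarrow> 'v \<times> 'v" where
  "alp d = (snd d, fst d)"
definition edg :: "'v \<times> 'v \<Rightarrow> 'v set" where
  "edg d = {fst d, snd d}"

locale PG =
  fixes V :: "'v set" and adj :: "'v \<Rightarrow> 'v \<Rightarrow> bool" and rot :: "'v \<Rightarrow> 'v \<Rightarrow> 'v"
    and pinf :: "('v \<times> 'v) set"
  assumes G: "plane_graph V adj rot pinf"
begin

abbreviation "D \<equiv> darts adj"
abbreviation "phi \<equiv> face_step rot"
abbreviation "sg \<equiv> sgr rot"

lemma finV: "finite V" using G unfolding plane_graph_def simple_graph_def by blast
lemma adjD: "adj u v \<Longrightarrow> u \<in> V \<and> v \<in> V \<and> u \<noteq> v \<and> adj v u"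
  using G unfolding plane_graph_def simple_graph_def by blast
lemma card3: "card V \<ge> 3" using G unfolding plane_graph_def two_connected_def by blast
lemma conn: "connected_on V adj" using G unfolding plane_graph_def two_connected_def by blast
lemma conn': "x \<in> V \<Longrightarrow> connected_on (V - {x}) adj"
  using G unfolding plane_graph_def two_connected_def by blast
lemma rotsys: "rotation_system V adj rot" using G unfolding plane_graph_def by blast
lemma eulerI: "int (card V) - int (card (graph_edges adj)) + int (card (faces adj rot)) = 2"
  using G unfolding plane_graph_def by blast
lemma pinf_face: "pinf \<in> faces adj rot" using G unfolding plane_graph_def by blast

lemma D_iff: "(u, v) \<in> D \<longleftrightarrow> adj u v" unfolding darts_def by simp
lemma D_mem: "d \<in> D \<longleftrightarrow> adj (fst d) (snd d)" unfolding darts_def by auto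

lemma finD: "finite D"
proof -
  have "D \<subseteq> V \<times> V"
  proof
    fix d assume "d \<in> D"
    then have "adj (fst d) (snd d)" using D_mem by blast
    then have "fst d \<in> V" "snd d \<in> V" using adjD by blast+
    then show "d \<in> V \<times> V" by (simp add: mem_Times_iff)
  qed
  moreover have "finite (V \<times> V)" using finV by simp
  ultimately show ?thesis by (rule finite_subset)
qed

lemma rot_bij: "u \<in> V \<Longrightarrow> bij_betw (rot u) (nbrs adj u) (nbrs adj u)"
  using rotsys unfolding rotation_system_def by blast

lemma rot_in: "adj u v \<Longrightarrow> adj u (rot u v)"
proof -
  assume a: "adj u v"
  then have "u \<in> V" using adjD[OF a] by blast
  then have "rot u ` nbrs adj u = nbrs adj u" using rot_bij[of u] unfolding bij_betw_def by blast
  moreover have "v \<in> nbrs adj u" using a unfolding nbrs_def by simp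
  ultimately have "rot u v \<in> nbrs adj u" by blast
  then show ?thesis unfolding nbrs_def by simp
qed

lemma rot_inj: "adj u v \<Longrightarrow> adj u v' \<Longrightarrow> rot u v = rot u v' \<Longrightarrow> v = v'"
proof -
  assume a: "adj u v" "adj u v'" "rot u v = rot u v'"
  then have "u \<in> V" using adjD[OF a(1)] by blast
  then have "inj_on (rot u) (nbrs adj u)" using rot_bij[of u] unfolding bij_betw_def by blast
  then show ?thesis using a unfolding nbrs_def inj_on_def by simp
qed

lemma rot_cyc: "adj u v \<Longrightarrow> adj u v' \<Longrightarrow> \<exists>n. (rot u ^^ n) v = v'"
proof -
  assume a: "adj u v" "adj u v'"
  then have u: "u \<in> V" using adjD[OF a(1)] by blast
  have "\<forall>x\<in>nbrs adj u. \<forall>y\<in>nbrs adj u. \<exists>n. (rot u ^^ n) x = y"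
    using rotsys u unfolding rotation_system_def by blast
  moreover have "v \<in> nbrs adj u" "v' \<in> nbrs adj u" using a unfolding nbrs_def by simp_all
  ultimately show ?thesis by blast
qed

lemma rot_pow_in: "adj u v \<Longrightarrow> adj u ((rot u ^^ n) v)"
  by (induction n) (auto intro: rot_in)

lemma other_vertex: "u \<in> V \<Longrightarrow> v \<in> V \<Longrightarrow> \<exists>z\<in>V. z \<noteq> u \<and> z \<noteq> v"
proof (rule ccontr)
  assume a: "u \<in> V" "v \<in> V" "\<not> (\<exists>z\<in>V. z \<noteq> u \<and> z \<noteq> v)"
  then have "V \<subseteq> {u, v}" by blast
  then have "card V \<le> card {u, v}" by (rule card_mono[rotated]) simp
  also have "\<dots> \<le> 2" by (simp add: card_insert_if)
  finally show False using card3 by simp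
qed

lemma first_step:
  assumes "(\<lambda>x y. adj x y \<and> x \<in> W \<and> y \<in> W)\<^sup>*\<^sup>* u z" "u \<noteq> z"
  shows "\<exists>y. adj u y \<and> y \<in> W"
  using assms by (induction rule: converse_rtranclp_induct) auto

lemma deg1: "u \<in> V \<Longrightarrow> \<exists>v. adj u v"
proof -
  assume u: "u \<in> V"
  obtain z where z: "z \<in> V" "z \<noteq> u" using other_vertex[OF u u] by blast
  have "(\<lambda>x y. adj x y \<and> x \<in> V \<and> y \<in> V)\<^sup>*\<^sup>* u z" using conn u z unfolding connected_on_def by blast
  then show ?thesis using first_step z(2)[symmetric] by blast
qed

lemma deg2: "adj u v \<Longrightarrow> \<exists>v'. adj u v' \<and> v' \<noteq> v"
proof (rule ccontr)
  assume a: "adj u v" "\<not> (\<exists>v'. adj u v' \<and> v' \<noteq> v)"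
  have uv: "u \<in> V" "v \<in> V" "u \<noteq> v" using adjD[OF a(1)] by auto
  obtain z where z: "z \<in> V" "z \<noteq> u" "z \<noteq> v" using other_vertex[OF uv(1,2)] by blast
  have "(\<lambda>x y. adj x y \<and> x \<in> V - {v} \<and> y \<in> V - {v})\<^sup>*\<^sup>* u z"
    using conn'[OF uv(2)] uv z unfolding connected_on_def by blast
  then obtain y where "adj u y" "y \<in> V - {v}" using first_step z(2)[symmetric] by blast
  then show False using a(2) by blast
qed

lemma rot_ne: "adj u v \<Longrightarrow> rot u v \<noteq> v"
proof
  assume a: "adj u v" "rot u v = v"
  obtain v' where v': "adj u v'" "v' \<noteq> v" using deg2[OF a(1)] by blast
  obtain n where n: "(rot u ^^ n) v = v'" using rot_cyc[OF a(1) v'(1)] by blast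
  have "(rot u ^^ m) v = v" for m by (induction m) (use a in auto)
  then show False using n v' by simp
qed

lemma sg_D: "d \<in> D \<Longrightarrow> sg d \<in> D"
  unfolding sgr_def D_mem using rot_in by simp

lemma permon_sg: "permon sg D"
  unfolding permon_def
proof (intro conjI)
  show "finite D" by (rule finD)
  show "sg ` D \<subseteq> D"
  proof
    fix y assume "y \<in> sg ` D"
    then obtain x where "x \<in> D" "y = sg x" by blast
    then show "y \<in> D" using sg_D[of x] by simp
  qed
  show "inj_on sg D"
  proof (rule inj_onI)
    fix x y assume xy: "x \<in> D" "y \<in> D" "sg x = sg y"
    then have f: "fst x = fst y" and r: "rot (fst x) (snd x) = rot (fst y) (snd y)"
      unfolding sgr_def by auto
    have ax: "adj (fst x) (snd x)" using xy(1) D_mem by blast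
    have ay: "adj (fst x) (snd y)" using xy(2) f D_mem by metis
    have r': "rot (fst x) (snd x) = rot (fst x) (snd y)" using r f by simp
    have "snd x = snd y" by (rule rot_inj[OF ax ay r'])
    then show "x = y" using f by (simp add: prod_eq_iff)
  qed
qed

lemma dmap_G: "dmap D sg alp edg"
  unfolding dmap_def
proof (intro conjI ballI)
  show "permon sg D" by (rule permon_sg)
  fix x assume x: "x \<in> D"
  have a: "adj (fst x) (snd x)" using x D_mem by blast
  show "alp x \<in> D" using adjD[OF a] unfolding alp_def D_mem by simp
  show "alp (alp x) = x" unfolding alp_def by simp
  show "alp x \<noteq> x" using adjD[OF a] unfolding alp_def by (auto simp: prod_eq_iff)
  show "edg (alp x) = edg x" unfolding alp_def edg_def by auto
  fix y assume y: "y \<in> D"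
  show "edg x = edg y \<longrightarrow> y = x \<or> y = alp x"
    unfolding edg_def alp_def by (auto simp: doubleton_eq_iff prod_eq_iff)
qed

lemma phi_eq: "phi = sg \<circ> alp"
  by (simp add: fun_eq_iff face_step_def sgr_def alp_def)

lemma face_of_orb: "face_of rot d = orb phi d"
  unfolding face_of_def orb_def by simp

lemma faces_eq: "faces adj rot = cycs phi D"
  unfolding faces_def cycs_def face_of_orb by simp

lemma edges_eq: "graph_edges adj = edg ` D"
proof
  show "graph_edges adj \<subseteq> edg ` D"
  proof
    fix e assume "e \<in> graph_edges adj"
    then obtain u v where uv: "e = {u, v}" "adj u v" unfolding graph_edges_def by blast
    then have "e = edg (u, v)" "(u, v) \<in> D" unfolding edg_def using D_iff by auto
    then show "e \<in> edg ` D" by blast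
  qed
  show "edg ` D \<subseteq> graph_edges adj"
  proof
    fix e assume "e \<in> edg ` D"
    then obtain d where d: "d \<in> D" "e = edg d" by blast
    then have "e = {fst d, snd d}" "adj (fst d) (snd d)" unfolding edg_def using D_mem by auto
    then show "e \<in> graph_edges adj" unfolding graph_edges_def by blast
  qed
qed

lemma sg_pow: "(sg ^^ n) (u, v) = (u, (rot u ^^ n) v)"
  by (induction n) (auto simp: sgr_def)

lemma orb_sg: "adj u v \<Longrightarrow> orb sg (u, v) = {u} \<times> nbrs adj u"
proof
  assume a: "adj u v"
  show "orb sg (u, v) \<subseteq> {u} \<times> nbrs adj u"
    unfolding orb_def sg_pow nbrs_def using rot_pow_in[OF a] by auto
  show "{u} \<times> nbrs adj u \<subseteq> orb sg (u, v)"
  proof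
    fix d assume "d \<in> {u} \<times> nbrs adj u"
    then obtain v' where d: "d = (u, v')" "adj u v'" unfolding nbrs_def by auto
    obtain n where "(rot u ^^ n) v = v'" using rot_cyc[OF a d(2)] by blast
    then have "d = (sg ^^ n) (u, v)" using d sg_pow by simp
    then show "d \<in> orb sg (u, v)" unfolding orb_def by blast
  qed
qed

lemma cardV: "card (cycs sg D) = card V"
proof -
  have eq: "cycs sg D = (\<lambda>u. {u} \<times> nbrs adj u) ` V"
  proof
    show "cycs sg D \<subseteq> (\<lambda>u. {u} \<times> nbrs adj u) ` V"
    proof
      fix C assume "C \<in> cycs sg D"
      then obtain d where d: "d \<in> D" "C = orb sg d" unfolding cycs_def by blast
      obtain u v where uv: "d = (u, v)" by (cases d)
      have a: "adj u v" using d uv D_iff by simp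
      then have "C = {u} \<times> nbrs adj u" using orb_sg d uv by simp
      moreover have "u \<in> V" using adjD[OF a] by blast
      ultimately show "C \<in> (\<lambda>u. {u} \<times> nbrs adj u) ` V" by blast
    qed
    show "(\<lambda>u. {u} \<times> nbrs adj u) ` V \<subseteq> cycs sg D"
    proof
      fix C assume "C \<in> (\<lambda>u. {u} \<times> nbrs adj u) ` V"
      then obtain u where u: "u \<in> V" "C = {u} \<times> nbrs adj u" by blast
      obtain v where a: "adj u v" using deg1[OF u(1)] by blast
      then have "C = orb sg (u, v)" using orb_sg u by simp
      moreover have "(u, v) \<in> D" using a D_iff by simp
      ultimately show "C \<in> cycs sg D" unfolding cycs_def by blast
    qed
  qed
  have inj: "inj_on (\<lambda>u. {u} \<times> nbrs adj u) V"
  proof (rule inj_onI)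
    fix u u' assume uu: "u \<in> V" "u' \<in> V" "{u} \<times> nbrs adj u = {u'} \<times> nbrs adj u'"
    obtain v where a: "adj u v" using deg1[OF uu(1)] by blast
    then have "(u, v) \<in> {u} \<times> nbrs adj u" unfolding nbrs_def by simp
    then have "(u, v) \<in> {u'} \<times> nbrs adj u'" using uu(3) by simp
    then show "u = u'" by simp
  qed
  show ?thesis unfolding eq using card_image[OF inj] by simp
qed

lemma euler_cycs: "card (cycs sg D) + card (cycs (sg \<circ> alp) D) = card (edg ` D) + 2"
  using eulerI unfolding faces_eq edges_eq phi_eq cardV by linarith

end

lemma pred_in_orb:
  assumes P: "permon f S" and x: "x \<in> S"
  shows "\<exists>q \<in> orb f x. f q = x"
proof -
  obtain p where p: "p > 0" "(f^^p) x = x" using permon_period[OF P x] by blast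
  have "f ((f^^(p-1)) x) = (f^^(Suc (p-1))) x" by simp
  also have "Suc (p-1) = p" using p(1) by simp
  finally have "f ((f^^(p-1)) x) = x" using p(2) by simp
  moreover have "(f^^(p-1)) x \<in> orb f x" by (rule orb_funpow)
  ultimately show ?thesis by blast
qed

context PG
begin

lemma Pphi: "permon phi D"
  unfolding phi_eq by (rule permon_phi[OF dmap_G])

lemma block_all:
  assumes w: "w \<in> V" and e1: "fst e1 = w" and e2: "fst e2 = w"
    and BD: "B \<subseteq> D" and Bne: "B \<noteq> {}"
    and cl: "\<forall>x\<in>B. (sg \<circ> sw e1 e2) x \<in> B \<and> alp x \<in> B"
  shows "B = D"
proof -
  let ?s = "sg \<circ> sw e1 e2"
  have sgp: "(?s^^n) (u, v) = (u, (rot u ^^ n) v)" if "u \<noteq> w" for u v n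
  proof (induction n)
    case 0 show ?case by simp
  next
    case (Suc n)
    have "sw e1 e2 (u, (rot u ^^ n) v) = (u, (rot u ^^ n) v)"
      using that e1 e2 unfolding sw_def by auto
    then show ?case using Suc by (simp add: sgr_def)
  qed
  have Bpow: "(?s^^n) x \<in> B" if "x \<in> B" for x n
    using that cl by (induction n) auto
  have star: "(u, v') \<in> B" if h: "u \<noteq> w" "(u, v) \<in> B" "adj u v" "adj u v'" for u v v'
  proof -
    obtain n where "(rot u ^^ n) v = v'" using rot_cyc[OF h(3,4)] by blast
    then have "(?s^^n) (u, v) = (u, v')" using sgp[OF h(1)] by simp
    then show ?thesis using Bpow[OF h(2), of n] by simp
  qed
  obtain x where xB: "x \<in> B" using Bne by blast
  have xD: "adj (fst x) (snd x)" using xB BD D_mem by blast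
  obtain d0 where d0: "d0 \<in> B" "fst d0 \<noteq> w"
  proof (cases "fst x = w")
    case True
    have "alp x \<in> B" using cl xB by blast
    moreover have "fst (alp x) \<noteq> w" using adjD[OF xD] True unfolding alp_def by auto
    ultimately show ?thesis using that by blast
  next
    case False then show ?thesis using that xB by blast
  qed
  define u0 where "u0 = fst d0"
  have a0: "adj u0 (snd d0)" using d0(1) BD D_mem unfolding u0_def by blast
  have u0V: "u0 \<in> V - {w}" using adjD[OF a0] d0(2) unfolding u0_def by simp
  have d0': "(u0, snd d0) \<in> B" using d0(1) unfolding u0_def by simp
  let ?R = "\<lambda>x y. adj x y \<and> x \<in> V - {w} \<and> y \<in> V - {w}"
  have reach: "\<forall>v. adj u v \<longrightarrow> (u, v) \<in> B" if "?R\<^sup>*\<^sup>* u0 u" for u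
    using that
  proof (induction rule: rtranclp_induct)
    case base
    show ?case using star[OF _ d0' a0] u0V by blast
  next
    case (step x y)
    have xy: "adj x y" "x \<in> V - {w}" "y \<in> V - {w}" using step.hyps(2) by auto
    have "(x, y) \<in> B" using step.IH xy(1) by blast
    then have yx: "(y, x) \<in> B" using cl unfolding alp_def by fastforce
    have "adj y x" using adjD[OF xy(1)] by blast
    then show ?case using star[OF _ yx] xy(3) by blast
  qed
  have "D \<subseteq> B"
  proof
    fix d assume dD: "d \<in> D"
    obtain u v where d: "d = (u, v)" by (cases d)
    have a: "adj u v" using dD d D_iff by simp
    show "d \<in> B"
    proof (cases "u = w")
      case False
      then have "u \<in> V - {w}" using adjD[OF a] by simp
      then have "?R\<^sup>*\<^sup>* u0 u" using conn'[OF w] u0V unfolding connected_on_def by blast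
      then show ?thesis using reach a d by blast
    next
      case True
      have av: "adj v u" "v \<in> V - {w}" using adjD[OF a] True by auto
      then have "?R\<^sup>*\<^sup>* u0 v" using conn'[OF w] u0V unfolding connected_on_def by blast
      then have "(v, u) \<in> B" using reach av(1) by blast
      then have "alp (v, u) \<in> B" using cl by blast
      then show ?thesis using d unfolding alp_def by simp
    qed
  qed
  then show ?thesis using BD by blast
qed

lemma face_orb: "f \<in> faces adj rot \<Longrightarrow> \<exists>d\<in>D. f = orb phi d"
  unfolding faces_eq cycs_def by blast

lemma face_tail_inj:
  assumes f: "f \<in> faces adj rot" and d1: "d1 \<in> f" and d2: "d2 \<in> f" and fst_eq: "fst d1 = fst d2"
  shows "d1 = d2"
proof (rule ccontr)
  assume ne: "d1 \<noteq> d2"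
  obtain d where dD: "d \<in> D" and fd: "f = orb phi d" using face_orb[OF f] by blast
  have fD: "f \<subseteq> D" using orb_subset[OF Pphi dD] fd by simp
  have d1D: "d1 \<in> D" and d2D: "d2 \<in> D" using fD d1 d2 by auto
  have of1: "orb phi d1 = f" using orb_eq[OF Pphi dD] d1 fd by simp
  have of2: "orb phi d2 = f" using orb_eq[OF Pphi dD] d2 fd by simp
  obtain q1 where q1: "q1 \<in> f" "phi q1 = d1" using pred_in_orb[OF Pphi d1D] of1 by blast
  obtain q2 where q2: "q2 \<in> f" "phi q2 = d2" using pred_in_orb[OF Pphi d2D] of2 by blast
  define w where "w = fst d1"
  have q1D: "q1 \<in> D" and q2D: "q2 \<in> D" using q1 q2 fD by auto
  have sq1: "snd q1 = w" using q1(2) unfolding w_def face_step_def by auto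
  have sq2: "snd q2 = w" using q2(2) fst_eq unfolding w_def face_step_def by auto
  define e1 where "e1 = alp q1"
  define e2 where "e2 = alp q2"
  have e1D: "e1 \<in> D" and e2D: "e2 \<in> D" using dmapD(2)[OF dmap_G] q1D q2D unfolding e1_def e2_def by auto
  have fe1: "fst e1 = w" and fe2: "fst e2 = w" unfolding e1_def e2_def alp_def using sq1 sq2 by auto
  have ne12: "e1 \<noteq> e2"
  proof
    assume "e1 = e2"
    then have "q1 = q2" unfolding e1_def e2_def alp_def by (simp add: prod_eq_iff)
    then show False using q1(2) q2(2) ne by simp
  qed
  have a1: "adj w (snd e1)" using e1D fe1 D_mem by metis
  have a2: "adj w (snd e2)" using e2D fe2 D_mem by metis
  have "orb sg (w, snd e1) = {w} \<times> nbrs adj w" by (rule orb_sg[OF a1])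
  moreover have "(w, snd e2) \<in> {w} \<times> nbrs adj w" using a2 unfolding nbrs_def by simp
  moreover have "e1 = (w, snd e1)" "e2 = (w, snd e2)" using fe1 fe2 by (simp_all add: prod_eq_iff)
  ultimately have o1: "e2 \<in> orb sg e1" by simp
  have aa: "alp e1 = q1" "alp e2 = q2" unfolding e1_def e2_def alp_def by simp_all
  have "orb phi q1 = f" using orb_eq[OF Pphi dD] q1(1) fd by simp
  then have o2: "alp e2 \<in> orb (sg \<circ> alp) (alp e1)" using aa q2(1) phi_eq by simp
  obtain B1 B2 where B: "B1 \<noteq> B2" "B1 \<noteq> {}" "B2 \<noteq> {}" "B1 \<subseteq> D" "B2 \<subseteq> D"
    "\<forall>x\<in>B1. (sg \<circ> sw e1 e2) x \<in> B1 \<and> alp x \<in> B1" "\<forall>x\<in>B2. (sg \<circ> sw e1 e2) x \<in> B2 \<and> alp x \<in> B2"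
    using split_blocks[OF dmap_G e1D e2D ne12 o1 o2 euler_cycs] by blast
  have wV: "w \<in> V" using a1 adjD by blast
  have "B1 = D" by (rule block_all[OF wV fe1 fe2 B(4) B(2) B(6)])
  moreover have "B2 = D" by (rule block_all[OF wV fe1 fe2 B(5) B(3) B(7)])
  ultimately show False using B(1) by simp
qed

lemma face_no_both:
  assumes f: "f \<in> faces adj rot" and uv: "(u, v) \<in> f" and vu: "(v, u) \<in> f"
  shows False
proof -
  obtain d where dD: "d \<in> D" and fd: "f = orb phi d" using face_orb[OF f] by blast
  have "phi (v, u) \<in> f" using orb_step vu fd by simp
  then have inf: "(u, rot u v) \<in> f" unfolding face_step_def by simp
  have "(u, v) \<in> D" using orb_subset[OF Pphi dD] uv fd by blast
  then have "rot u v \<noteq> v" using rot_ne D_iff by blast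
  then show False using face_tail_inj[OF f uv inf] by simp
qed

end

lemma min_prod0:
  fixes x y c :: int
  assumes "c \<le> x" "c \<le> y" "(x - c) * (y - c) = 0"
  shows "c = min x y"
proof -
  have "x - c = 0 \<or> y - c = 0" using assms(3) by simp
  then show ?thesis using assms(1,2) by auto
qed

lemma sq_one:
  fixes c :: int
  assumes "c \<le> 0" "(0 - c) * (0 - c) = 1"
  shows "c = -1"
proof -
  have "c \<noteq> 0" using assms(2) by auto
  then have c1: "c \<le> -1" using assms(1) by simp
  have "c \<ge> -1"
  proof (rule ccontr)
    assume "\<not> c \<ge> -1"
    then have "2 \<le> -c" by simp
    then have "2 * (-c) \<le> (-c) * (-c)" by (rule mult_right_mono) (use c1 in simp)
    then show False using assms(2) \<open>2 \<le> -c\<close> by simp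
  qed
  then show ?thesis using c1 by simp
qed

lemma face_edgesI: "(x, y) \<in> f \<Longrightarrow> {x, y} \<in> face_edges f"
  unfolding face_edges_def by blast

context PG
begin

lemma orb_in_faces: "d \<in> D \<Longrightarrow> orb phi d \<in> faces adj rot"
  unfolding faces_eq cycs_def by blast

lemma face_sub: "f \<in> faces adj rot \<Longrightarrow> f \<subseteq> D"
  using face_orb orb_subset[OF Pphi] by blast

lemma mem_face: "f \<in> faces adj rot \<Longrightarrow> x \<in> f \<Longrightarrow> orb phi x = f"
  using face_orb orb_eq[OF Pphi] by metis

lemma in_pinf_iff: "x \<in> D \<Longrightarrow> orb phi x = pinf \<longleftrightarrow> x \<in> pinf"
  using mem_face[OF pinf_face, of x] orb_self[of x phi] by auto

lemma pinf_D: "pinf \<subseteq> D" by (rule face_sub[OF pinf_face])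

lemma phi_D: "x \<in> D \<Longrightarrow> phi x \<in> D"
  using Pphi unfolding permon_def by blast

lemma orb_phi_step: "x \<in> D \<Longrightarrow> orb phi (phi x) = orb phi x"
  using orb_eq[OF Pphi] orb_step orb_self by metis

lemma sg_alp_face: "x \<in> D \<Longrightarrow> orb phi (sg x) = orb phi (alp x)"
proof -
  assume x: "x \<in> D"
  have "sg x = phi (alp x)" unfolding phi_eq alp_def by simp
  moreover have "alp x \<in> D" using dmapD(2)[OF dmap_G x] .
  ultimately show ?thesis using orb_phi_step by simp
qed

lemma fst_phi: "fst (phi d) = snd d" unfolding face_step_def by simp

lemma fst_sg_pow: "fst ((sg^^n) x) = fst x"
  by (induction n) (auto simp: sgr_def)

lemma face_verts_fin: "f \<in> faces adj rot \<Longrightarrow> finite (face_verts f)"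
  unfolding face_verts_def using face_sub finD finite_subset by blast

lemma face_verts_ne: "f \<in> faces adj rot \<Longrightarrow> face_verts f \<noteq> {}"
  unfolding face_verts_def using face_orb orb_self by fastforce

lemma bface_le: "f \<in> faces adj rot \<Longrightarrow> v \<in> face_verts f \<Longrightarrow> bface b f \<le> b v"
  unfolding bface_def using face_verts_fin by simp

lemma verts_of_dart: "f \<in> faces adj rot \<Longrightarrow> (u, v) \<in> f \<Longrightarrow> u \<in> face_verts f \<and> v \<in> face_verts f"
proof -
  assume f: "f \<in> faces adj rot" and uv: "(u, v) \<in> f"
  have "orb phi (u, v) = f" by (rule mem_face[OF f uv])
  then have "phi (u, v) \<in> f" using orb_step orb_self by metis
  then have "v \<in> fst ` f" using fst_phi[of "(u, v)"] by force
  moreover have "u \<in> fst ` f" using uv by force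
  ultimately show ?thesis unfolding face_verts_def by simp
qed

lemma edge_equal:
  assumes c3: "\<forall>p'\<in>bounded_faces adj rot pinf. \<forall>v1 v2.
               {v1, v2} \<in> face_edges p' \<and> {v1, v2} \<notin> face_edges pinf \<longrightarrow>
               (b v1 - bface b p') * (b v2 - bface b p') = 0"
    and d: "d \<in> D" and n1: "orb phi d \<noteq> pinf" and n2: "orb phi (alp d) \<noteq> pinf"
  shows "bface b (orb phi d) = bface b (orb phi (alp d))"
proof -
  obtain u v where uv: "d = (u, v)" by (cases d)
  have ad: "alp d = (v, u)" unfolding alp_def using uv by simp
  have uvD: "(u, v) \<in> D" and vuD: "(v, u) \<in> D" using d uv ad dmapD(2)[OF dmap_G d] by auto
  define f1 where "f1 = orb phi (u, v)"
  define f2 where "f2 = orb phi (v, u)"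
  have f1F: "f1 \<in> faces adj rot" and f2F: "f2 \<in> faces adj rot"
    using orb_in_faces uvD vuD unfolding f1_def f2_def by auto
  have b1: "f1 \<in> bounded_faces adj rot pinf" using f1F n1 uv unfolding bounded_faces_def f1_def by simp
  have b2: "f2 \<in> bounded_faces adj rot pinf" using f2F n2 ad unfolding bounded_faces_def f2_def by simp
  have m1: "(u, v) \<in> f1" unfolding f1_def by (rule orb_self)
  have m2: "(v, u) \<in> f2" unfolding f2_def by (rule orb_self)
  have e1: "{u, v} \<in> face_edges f1" by (rule face_edgesI[OF m1])
  have "{v, u} \<in> face_edges f2" by (rule face_edgesI[OF m2])
  then have e2: "{u, v} \<in> face_edges f2" by (simp add: insert_commute)
  have e3: "{u, v} \<notin> face_edges pinf"
  proof
    assume "{u, v} \<in> face_edges pinf"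
    then obtain x y where xy: "{u, v} = {x, y}" "(x, y) \<in> pinf" unfolding face_edges_def by blast
    then have "(x, y) = (u, v) \<or> (x, y) = (v, u)" by (auto simp: doubleton_eq_iff)
    then have "(u, v) \<in> pinf \<or> (v, u) \<in> pinf" using xy(2) by auto
    then show False using in_pinf_iff[OF uvD] in_pinf_iff[OF vuD] n1 n2 uv ad by auto
  qed
  have z1: "(b u - bface b f1) * (b v - bface b f1) = 0" using c3 b1 e1 e3 by blast
  have z2: "(b u - bface b f2) * (b v - bface b f2) = 0" using c3 b2 e2 e3 by blast
  have vs1: "u \<in> face_verts f1" "v \<in> face_verts f1" using verts_of_dart[OF f1F m1] by auto
  have vs2: "u \<in> face_verts f2" "v \<in> face_verts f2" using verts_of_dart[OF f2F m2] by auto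
  have "bface b f1 = min (b u) (b v)"
    by (rule min_prod0[OF bface_le[OF f1F vs1(1)] bface_le[OF f1F vs1(2)] z1])
  moreover have "bface b f2 = min (b u) (b v)"
    by (rule min_prod0[OF bface_le[OF f2F vs2(1)] bface_le[OF f2F vs2(2)] z2])
  ultimately show ?thesis unfolding f1_def f2_def using uv ad by simp
qed


lemma chain:
  assumes c3: "\<forall>p'\<in>bounded_faces adj rot pinf. \<forall>v1 v2.
               {v1, v2} \<in> face_edges p' \<and> {v1, v2} \<notin> face_edges pinf \<longrightarrow>
               (b v1 - bface b p') * (b v2 - bface b p') = 0"
    and xD: "x \<in> D"
  shows "(\<forall>i\<le>n. (sg^^i) x \<notin> pinf) \<Longrightarrow> bface b (orb phi ((sg^^n) x)) = bface b (orb phi x)"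
proof (induction n)
  case 0 show ?case by simp
next
  case (Suc n)
  define y where "y = (sg^^n) x"
  have yD: "y \<in> D" unfolding y_def by (rule permon_funpow_in[OF permon_sg xD])
  have IH: "bface b (orb phi y) = bface b (orb phi x)" using Suc unfolding y_def by simp
  have "y \<notin> pinf" using Suc.prems unfolding y_def by simp
  then have n1: "orb phi y \<noteq> pinf" using in_pinf_iff[OF yD] by simp
  have sy: "(sg^^Suc n) x = sg y" unfolding y_def by simp
  have "sg y \<notin> pinf" using Suc.prems sy by (metis le_refl)
  moreover have syD: "sg y \<in> D" by (rule sg_D[OF yD])
  ultimately have "orb phi (sg y) \<noteq> pinf" using in_pinf_iff by simp
  then have n2: "orb phi (alp y) \<noteq> pinf" using sg_alp_face[OF yD] by simp
  have "bface b (orb phi y) = bface b (orb phi (alp y))" by (rule edge_equal[OF c3 yD n1 n2])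
  then show ?case using IH sy sg_alp_face[OF yD] by simp
qed

lemma same_star: "x \<in> D \<Longrightarrow> y \<in> D \<Longrightarrow> fst x = fst y \<Longrightarrow> y \<in> orb sg x"
proof -
  assume x: "x \<in> D" and y: "y \<in> D" and f: "fst x = fst y"
  have ax: "adj (fst x) (snd x)" using x D_mem by blast
  have ay: "adj (fst x) (snd y)" using y f D_mem by metis
  have "orb sg (fst x, snd x) = {fst x} \<times> nbrs adj (fst x)" by (rule orb_sg[OF ax])
  moreover have "(fst x, snd y) \<in> {fst x} \<times> nbrs adj (fst x)" using ay unfolding nbrs_def by simp
  ultimately show ?thesis using f by (metis prod.collapse)
qed

lemma key_reach:
  assumes c3: "\<forall>p'\<in>bounded_faces adj rot pinf. \<forall>v1 v2.
               {v1, v2} \<in> face_edges p' \<and> {v1, v2} \<notin> face_edges pinf \<longrightarrow>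
               (b v1 - bface b p') * (b v2 - bface b p') = 0"
    and ds: "ds \<in> D" and dk: "dk \<in> D" and f: "fst ds = fst dk" and nk: "dk \<notin> pinf"
    and per: "\<And>i. (sg^^i) ds \<in> pinf \<Longrightarrow> (sg^^(Suc i)) ds = ds"
  shows "bface b (orb phi dk) = bface b (orb phi ds)"
proof -
  have "dk \<in> orb sg ds" by (rule same_star[OF ds dk f])
  then obtain n0 where n0: "(sg^^n0) ds = dk" unfolding orb_def by blast
  define n where "n = (LEAST n. (sg^^n) ds = dk)"
  have n: "(sg^^n) ds = dk" unfolding n_def by (rule LeastI[where P="\<lambda>n. (sg^^n) ds = dk", OF n0])
  have nm: "\<And>m. (sg^^m) ds = dk \<Longrightarrow> n \<le> m" unfolding n_def by (rule Least_le)
  have "\<forall>i\<le>n. (sg^^i) ds \<notin> pinf"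
  proof (intro allI impI)
    fix i assume i: "i \<le> n"
    show "(sg^^i) ds \<notin> pinf"
    proof
      assume ip: "(sg^^i) ds \<in> pinf"
      have p: "(sg^^(Suc i)) ds = ds" by (rule per[OF ip])
      show False
      proof (cases "i = n")
        case True then show False using ip n nk by simp
      next
        case False
        then have lt: "Suc i \<le> n" using i by simp
        have "(sg^^(n - Suc i)) ((sg^^(Suc i)) ds) = (sg^^(n - Suc i + Suc i)) ds" by (rule funpow_app)
        also have "n - Suc i + Suc i = n" using lt by simp
        finally have "(sg^^(n - Suc i)) ds = dk" using p n by simp
        then have "n \<le> n - Suc i" by (rule nm)
        then show False using lt by simp
      qed
    qed
  qed
  then show ?thesis using chain[OF c3 ds, of n] n by simp
qed

lemma vertex_const:
  assumes c3: "\<forall>p'\<in>bounded_faces adj rot pinf. \<forall>v1 v2.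
               {v1, v2} \<in> face_edges p' \<and> {v1, v2} \<notin> face_edges pinf \<longrightarrow>
               (b v1 - bface b p') * (b v2 - bface b p') = 0"
    and d1: "d1 \<in> D" and d2: "d2 \<in> D" and f: "fst d1 = fst d2"
    and n1: "orb phi d1 \<noteq> pinf" and n2: "orb phi d2 \<noteq> pinf"
  shows "bface b (orb phi d1) = bface b (orb phi d2)"
proof -
  have p1: "d1 \<notin> pinf" and p2: "d2 \<notin> pinf" using in_pinf_iff d1 d2 n1 n2 by auto
  show ?thesis
  proof (cases "\<exists>q\<in>pinf. fst q = fst d1")
    case True
    then obtain q where q: "q \<in> pinf" "fst q = fst d1" by blast
    have qD: "q \<in> D" using q(1) pinf_D by blast
    define ds where "ds = sg q"
    have dsD: "ds \<in> D" unfolding ds_def by (rule sg_D[OF qD])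
    have fds: "fst ds = fst d1" unfolding ds_def sgr_def using q(2) by simp
    have per: "(sg^^(Suc i)) ds = ds" if "(sg^^i) ds \<in> pinf" for i
    proof -
      have "fst ((sg^^i) ds) = fst q" using fst_sg_pow fds q(2) by simp
      then have "(sg^^i) ds = q" using face_tail_inj[OF pinf_face that q(1)] by simp
      then show ?thesis unfolding ds_def by simp
    qed
    have "bface b (orb phi d1) = bface b (orb phi ds)"
      by (rule key_reach[OF c3 dsD d1 fds p1 per])
    moreover have "bface b (orb phi d2) = bface b (orb phi ds)"
      by (rule key_reach[OF c3 dsD d2 _ p2 per]) (use fds f in simp)
    ultimately show ?thesis by simp
  next
    case False
    have per: "(sg^^(Suc i)) d1 = d1" if "(sg^^i) d1 \<in> pinf" for i
      using False that fst_sg_pow by blast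
    have "bface b (orb phi d2) = bface b (orb phi d1)"
      by (rule key_reach[OF c3 d1 d2 f p2 per])
    then show ?thesis by simp
  qed
qed

end

context PG
begin

lemma all_bounded_m1:
  assumes c3: "\<forall>p'\<in>bounded_faces adj rot pinf. \<forall>v1 v2.
               {v1, v2} \<in> face_edges p' \<and> {v1, v2} \<notin> face_edges pinf \<longrightarrow>
               (b v1 - bface b p') * (b v2 - bface b p') = 0"
    and c1: "\<exists>p\<in>bounded_faces adj rot pinf. \<exists>v v'.
               {v, v'} \<in> face_edges p \<and> {v, v'} \<in> face_edges pinf \<and>
               b v = 0 \<and> b v' = 0 \<and> (b v - bface b p) * (b v' - bface b p) = 1"
  shows "\<forall>f\<in>bounded_faces adj rot pinf. bface b f = -1"
proof -
  obtain p v v' where p: "p \<in> bounded_faces adj rot pinf" and e: "{v, v'} \<in> face_edges p"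
    and bv: "b v = 0" "b v' = 0" and pr: "(b v - bface b p) * (b v' - bface b p) = 1"
    using c1 by blast
  have pF: "p \<in> faces adj rot" and pn: "p \<noteq> pinf" using p unfolding bounded_faces_def by auto
  obtain x y where xy: "{v, v'} = {x, y}" "(x, y) \<in> p" using e unfolding face_edges_def by blast
  have "v \<in> {v, v'}" by simp
  then have "v = x \<or> v = y" unfolding xy(1) by simp
  then have "v \<in> face_verts p" using verts_of_dart[OF pF xy(2)] by (elim disjE) simp_all
  then have "bface b p \<le> b v" by (rule bface_le[OF pF])
  then have "bface b p \<le> 0" using bv by simp
  moreover have "(0 - bface b p) * (0 - bface b p) = 1" using pr bv by simp
  ultimately have bp: "bface b p = -1" by (rule sq_one)
  obtain d0 where d0: "d0 \<in> D" "p = orb phi d0" using face_orb[OF pF] by blast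
  define Q where "Q u \<longleftrightarrow> (\<forall>d\<in>D. fst d = u \<longrightarrow> orb phi d \<noteq> pinf \<longrightarrow> bface b (orb phi d) = -1)" for u
  have Q0: "Q (fst d0)" unfolding Q_def
  proof (intro ballI impI)
    fix d assume h: "d \<in> D" "fst d = fst d0" "orb phi d \<noteq> pinf"
    have "orb phi d0 \<noteq> pinf" using d0 pn by simp
    then have "bface b (orb phi d) = bface b (orb phi d0)"
      by (rule vertex_const[OF c3 h(1) d0(1) h(2) h(3)])
    then show "bface b (orb phi d) = -1" using bp d0 by simp
  qed
  have Qstep: "Q v" if "Q u" "adj u v" for u v
  proof -
    have uvD: "(u, v) \<in> D" and vuD: "(v, u) \<in> D" using that(2) adjD D_iff by auto
    have "\<not> ((u, v) \<in> pinf \<and> (v, u) \<in> pinf)" using face_no_both[OF pinf_face] by blast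
    then have "orb phi (u, v) \<noteq> pinf \<or> orb phi (v, u) \<noteq> pinf" using in_pinf_iff uvD vuD by auto
    then show ?thesis
    proof
      assume nb: "orb phi (u, v) \<noteq> pinf"
      have m1: "bface b (orb phi (u, v)) = -1" using that(1) uvD nb unfolding Q_def by auto
      define x where "x = phi (u, v)"
      have xD: "x \<in> D" unfolding x_def by (rule phi_D[OF uvD])
      have fx: "fst x = v" unfolding x_def face_step_def by simp
      have ox: "orb phi x = orb phi (u, v)" unfolding x_def by (rule orb_phi_step[OF uvD])
      show "Q v" unfolding Q_def
      proof (intro ballI impI)
        fix d assume h: "d \<in> D" "fst d = v" "orb phi d \<noteq> pinf"
        have "fst d = fst x" using h(2) fx by simp
        moreover have "orb phi x \<noteq> pinf" using ox nb by simp
        ultimately have "bface b (orb phi d) = bface b (orb phi x)"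
          by (rule vertex_const[OF c3 h(1) xD _ h(3)])
        then show "bface b (orb phi d) = -1" using ox m1 by simp
      qed
    next
      assume nb: "orb phi (v, u) \<noteq> pinf"
      define y where "y = phi (v, u)"
      have yD: "y \<in> D" unfolding y_def by (rule phi_D[OF vuD])
      have fy: "fst y = u" unfolding y_def face_step_def by simp
      have oy: "orb phi y = orb phi (v, u)" unfolding y_def by (rule orb_phi_step[OF vuD])
      have m1: "bface b (orb phi (v, u)) = -1" using that(1) yD fy oy nb unfolding Q_def by auto
      show "Q v" unfolding Q_def
      proof (intro ballI impI)
        fix d assume h: "d \<in> D" "fst d = v" "orb phi d \<noteq> pinf"
        have "fst d = fst (v, u)" using h(2) by simp
        then have "bface b (orb phi d) = bface b (orb phi (v, u))"
          by (rule vertex_const[OF c3 h(1) vuD _ h(3) nb])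
        then show "bface b (orb phi d) = -1" using m1 by simp
      qed
    qed
  qed
  have u0V: "fst d0 \<in> V" using d0(1) D_mem adjD by blast
  have QV: "Q w" if "w \<in> V" for w
  proof -
    have "(\<lambda>x y. adj x y \<and> x \<in> V \<and> y \<in> V)\<^sup>*\<^sup>* (fst d0) w" using conn u0V that unfolding connected_on_def by blast
    then show ?thesis
    proof (induction rule: rtranclp_induct)
      case base then show ?case by (rule Q0)
    next
      case (step x y) then show ?case using Qstep by blast
    qed
  qed
  show ?thesis
  proof
    fix f assume f: "f \<in> bounded_faces adj rot pinf"
    then have fF: "f \<in> faces adj rot" and fn: "f \<noteq> pinf" unfolding bounded_faces_def by auto
    obtain d where d: "d \<in> D" "f = orb phi d" using face_orb[OF fF] by blast
    have "fst d \<in> V" using d(1) D_mem adjD by blast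
    then show "bface b f = -1" using QV[of "fst d"] d fn unfolding Q_def by blast
  qed
qed

end

context PG
begin

lemma faces_fin: "finite (faces adj rot)"
  unfolding faces_eq by (rule card_cycs_finite[OF Pphi])

lemma Union_faces: "\<Union>(faces adj rot) = D"
proof
  show "\<Union>(faces adj rot) \<subseteq> D" using face_sub by blast
  show "D \<subseteq> \<Union>(faces adj rot)"
  proof
    fix d assume "d \<in> D"
    then have "orb phi d \<in> faces adj rot" by (rule orb_in_faces)
    then show "d \<in> \<Union>(faces adj rot)" using orb_self[of d phi] by blast
  qed
qed

lemma sum_faces: "(\<Sum>f\<in>faces adj rot. card f) = card D"
proof -
  have pw: "pairwise disjnt (faces adj rot)"
    unfolding pairwise_def disjnt_def
  proof (intro ballI impI)
    fix f1 f2 assume f: "f1 \<in> faces adj rot" "f2 \<in> faces adj rot" "f1 \<noteq> f2"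
    show "f1 \<inter> f2 = {}"
    proof (rule ccontr)
      assume "f1 \<inter> f2 \<noteq> {}"
      then obtain x where x: "x \<in> f1" "x \<in> f2" by blast
      have "orb phi x = f1" by (rule mem_face[OF f(1) x(1)])
      moreover have "orb phi x = f2" by (rule mem_face[OF f(2) x(2)])
      ultimately have "f1 = f2" by simp
      then show False using f(3) by simp
    qed
  qed
  have fin: "\<And>f. f \<in> faces adj rot \<Longrightarrow> finite f" using face_sub finD finite_subset by blast
  have "card (\<Union>(faces adj rot)) = (\<Sum>f\<in>faces adj rot. card f)" by (rule card_Union_disjoint[OF pw fin])
  then show ?thesis using Union_faces by simp
qed

lemma cardD2: "card D = 2 * card (edg ` D)"
proof -
  define A where "A e = {x \<in> D. edg x = e}" for e
  have U: "\<Union>(A ` (edg ` D)) = D" unfolding A_def by blast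
  have fin: "\<forall>i\<in>edg ` D. finite (A i)" unfolding A_def using finD by simp
  have dis: "\<forall>i\<in>edg ` D. \<forall>j\<in>edg ` D. i \<noteq> j \<longrightarrow> A i \<inter> A j = {}" unfolding A_def by blast
  have c2: "card (A e) = 2" if he: "e \<in> edg ` D" for e
  proof -
    obtain x0 where x0: "x0 \<in> D" "e = edg x0" using he by blast
    have aD: "alp x0 \<in> D" using dmapD(2)[OF dmap_G x0(1)] .
    have ne: "alp x0 \<noteq> x0" using dmapD(4)[OF dmap_G x0(1)] .
    have ea: "edg (alp x0) = edg x0" using dmapD(5)[OF dmap_G x0(1)] .
    have "A e = {x0, alp x0}"
    proof
      show "A e \<subseteq> {x0, alp x0}"
      proof
        fix y assume "y \<in> A e"
        then have "y \<in> D" "edg x0 = edg y" unfolding A_def using x0 by auto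
        then have "y = x0 \<or> y = alp x0" using dmapD(6)[OF dmap_G x0(1)] by blast
        then show "y \<in> {x0, alp x0}" by blast
      qed
      show "{x0, alp x0} \<subseteq> A e" unfolding A_def using x0 aD ea by auto
    qed
    then show ?thesis using ne by simp
  qed
  have "card D = (\<Sum>i\<in>edg ` D. card (A i))"
    using card_UN_disjoint[OF _ fin dis] U finD by simp
  also have "\<dots> = (\<Sum>i\<in>edg ` D. 2)" using c2 by simp
  finally show ?thesis by simp
qed

lemma face_edges_img: "face_edges f = edg ` f"
proof
  show "face_edges f \<subseteq> edg ` f"
  proof
    fix e assume "e \<in> face_edges f"
    then obtain u v where "e = {u, v}" "(u, v) \<in> f" unfolding face_edges_def by blast
    then have "e = edg (u, v)" "(u, v) \<in> f" unfolding edg_def by auto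
    then show "e \<in> edg ` f" by blast
  qed
  show "edg ` f \<subseteq> face_edges f"
  proof
    fix e assume "e \<in> edg ` f"
    then obtain d where d: "d \<in> f" "e = edg d" by blast
    then have "(fst d, snd d) \<in> f" "e = {fst d, snd d}" unfolding edg_def by auto
    then show "e \<in> face_edges f" unfolding face_edges_def by blast
  qed
qed

lemma face_len_card: "f \<in> faces adj rot \<Longrightarrow> face_len f = card f"
proof -
  assume f: "f \<in> faces adj rot"
  have inj: "inj_on edg f"
  proof (rule inj_onI)
    fix x y assume xy: "x \<in> f" "y \<in> f" "edg x = edg y"
    have xD: "x \<in> D" and yD: "y \<in> D" using xy face_sub[OF f] by auto
    have "y = x \<or> y = alp x" using dmapD(6)[OF dmap_G xD yD xy(3)] .
    moreover have "y \<noteq> alp x"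
    proof
      assume "y = alp x"
      then have "(snd x, fst x) \<in> f" using xy(2) unfolding alp_def by simp
      moreover have "(fst x, snd x) \<in> f" using xy(1) by simp
      ultimately show False using face_no_both[OF f] by blast
    qed
    ultimately show "x = y" by simp
  qed
  show ?thesis unfolding face_len_def face_edges_img using card_image[OF inj] by simp
qed

lemma card_vinf: "card (face_verts pinf) = card pinf"
proof -
  have "inj_on fst pinf" using face_tail_inj[OF pinf_face] by (meson inj_onI)
  then show ?thesis unfolding face_verts_def by (rule card_image)
qed

lemma vinf_sub: "face_verts pinf \<subseteq> V"
  unfolding face_verts_def using pinf_D D_mem adjD by blast

lemma vert_in_bounded: "w \<in> V \<Longrightarrow> \<exists>f\<in>bounded_faces adj rot pinf. w \<in> face_verts f"
proof -
  assume w: "w \<in> V"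
  obtain v where a: "adj w v" using deg1[OF w] by blast
  have wvD: "(w, v) \<in> D" and vwD: "(v, w) \<in> D" using a adjD D_iff by auto
  have "\<not> ((w, v) \<in> pinf \<and> (v, w) \<in> pinf)" using face_no_both[OF pinf_face] by blast
  then show ?thesis
  proof (cases "(w, v) \<in> pinf")
    case False
    then have n: "(w, v) \<notin> pinf" .
    define f where "f = orb phi (w, v)"
    have fF: "f \<in> faces adj rot" unfolding f_def by (rule orb_in_faces[OF wvD])
    have "f \<noteq> pinf" using in_pinf_iff[OF wvD] n unfolding f_def by simp
    then have "f \<in> bounded_faces adj rot pinf" using fF unfolding bounded_faces_def by simp
    moreover have "w \<in> face_verts f" using verts_of_dart[OF fF, of w v] orb_self unfolding f_def by metis
    ultimately show ?thesis by blast
  next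
    case True
    then have n: "(v, w) \<notin> pinf" using \<open>\<not> ((w, v) \<in> pinf \<and> (v, w) \<in> pinf)\<close> by blast
    define f where "f = orb phi (v, w)"
    have fF: "f \<in> faces adj rot" unfolding f_def by (rule orb_in_faces[OF vwD])
    have "f \<noteq> pinf" using in_pinf_iff[OF vwD] n unfolding f_def by simp
    then have "f \<in> bounded_faces adj rot pinf" using fF unfolding bounded_faces_def by simp
    moreover have "w \<in> face_verts f" using verts_of_dart[OF fF, of v w] orb_self unfolding f_def by metis
    ultimately show ?thesis by blast
  qed
qed

lemma Bval_eq:
  assumes a1: "\<forall>p\<in>bounded_faces adj rot pinf. a p = 1"
  shows "Bval V adj rot pinf a b = 2 * (\<Sum>v\<in>V. b v) + 2 * int (card V) - 2 - int (card (face_verts pinf))"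
proof -
  have s1: "(\<Sum>p\<in>bounded_faces adj rot pinf. (int (face_len p) - 2) * a p)
      = (\<Sum>p\<in>bounded_faces adj rot pinf. int (card p) - 2)"
  proof (rule sum.cong)
    fix p assume p: "p \<in> bounded_faces adj rot pinf"
    then have "p \<in> faces adj rot" unfolding bounded_faces_def by simp
    then show "(int (face_len p) - 2) * a p = int (card p) - 2" using face_len_card a1 p by simp
  qed simp
  have s2: "(\<Sum>p\<in>bounded_faces adj rot pinf. int (card p) - 2)
      = (\<Sum>p\<in>faces adj rot. int (card p) - 2) - (int (card pinf) - 2)"
    unfolding bounded_faces_def using sum_diff1[OF faces_fin, of "\<lambda>p. int (card p) - 2" pinf] pinf_face by simp
  have s3: "(\<Sum>p\<in>faces adj rot. int (card p) - 2) = int (card D) - 2 * int (card (faces adj rot))"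
    using sum_faces by (simp add: sum_subtractf of_nat_sum[symmetric])
  have e: "int (card V) - int (card (graph_edges adj)) + int (card (faces adj rot)) = 2" by (rule eulerI)
  have cD: "int (card D) = 2 * int (card (graph_edges adj))" using cardD2 edges_eq by simp
  show ?thesis unfolding Bval_def using s1 s2 s3 e cD card_vinf by simp
qed

end

theorem lemma4p2:
  fixes V :: "'v set" and adj :: "'v \<Rightarrow> 'v \<Rightarrow> bool" and rot :: "'v \<Rightarrow> 'v \<Rightarrow> 'v"
    and pinf :: "('v \<times> 'v) set"
    and a :: "('v \<times> 'v) set \<Rightarrow> int" and b :: "'v \<Rightarrow> int"
  assumes G: "plane_graph V adj rot pinf"
    and adm: "admissible adj rot pinf a b"
    and c1: "\<exists>p\<in>bounded_faces adj rot pinf. \<exists>v v'.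
               {v, v'} \<in> face_edges p \<and> {v, v'} \<in> face_edges pinf \<and>
               b v = 0 \<and> b v' = 0 \<and> (b v - bface b p) * (b v' - bface b p) = 1"
    and c2: "\<forall>p'\<in>bounded_faces adj rot pinf. a p' + bface b p' = 0"
    and c3: "\<forall>p'\<in>bounded_faces adj rot pinf. \<forall>v1 v2.
               {v1, v2} \<in> face_edges p' \<and> {v1, v2} \<notin> face_edges pinf \<longrightarrow>
               (b v1 - bface b p') * (b v2 - bface b p') = 0"
  shows "(\<forall>w\<in>V. b w \<ge> -1) \<and>
         (\<forall>p'\<in>bounded_faces adj rot pinf. a p' = 1) \<and>
         Bval V adj rot pinf a b \<ge> int (card (face_verts pinf)) - 2 \<and>
         (Bval V adj rot pinf a b = int (card (face_verts pinf)) - 2 \<longleftrightarrow>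
            (\<forall>w\<in>face_verts pinf. b w = 0) \<and>
            (\<forall>w\<in>V - face_verts pinf. b w = -1) \<and>
            (\<forall>p'\<in>bounded_faces adj rot pinf. a p' = 1))"
proof -
  interpret PG V adj rot pinf using G by (simp add: PG_def)
  have m1: "\<forall>f\<in>bounded_faces adj rot pinf. bface b f = -1" by (rule all_bounded_m1[OF c3 c1])
  have A1: "\<forall>p'\<in>bounded_faces adj rot pinf. a p' = 1"
  proof
    fix p' assume p': "p' \<in> bounded_faces adj rot pinf"
    then have "a p' + bface b p' = 0" "bface b p' = -1" using c2 m1 by auto
    then show "a p' = 1" by simp
  qed
  have B1: "\<forall>w\<in>V. b w \<ge> -1"
  proof
    fix w assume w: "w \<in> V"
    obtain f where f: "f \<in> bounded_faces adj rot pinf" "w \<in> face_verts f" using vert_in_bounded[OF w] by blast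
    have fF: "f \<in> faces adj rot" using f(1) unfolding bounded_faces_def by simp
    have "bface b f \<le> b w" by (rule bface_le[OF fF f(2)])
    then show "b w \<ge> -1" using m1 f(1) by simp
  qed
  define Vi where "Vi = face_verts pinf"
  have ViV: "Vi \<subseteq> V" unfolding Vi_def by (rule vinf_sub)
  have finVi: "finite Vi" using finite_subset[OF ViV finV] .
  have adm2: "\<forall>w\<in>Vi. b w \<ge> 0" using adm unfolding admissible_def Vi_def by blast
  define lb where "lb w = (if w \<in> Vi then 0 else -1 :: int)" for w
  have nn: "\<forall>w\<in>V. b w - lb w \<ge> 0" using B1 adm2 unfolding lb_def by auto
  have slb: "(\<Sum>w\<in>V. lb w) = - int (card (V - Vi))"
  proof -
    have "(\<Sum>w\<in>V. lb w) = (\<Sum>w\<in>V - Vi. lb w) + (\<Sum>w\<in>Vi. lb w)"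
      by (rule sum.subset_diff[OF ViV finV])
    also have "(\<Sum>w\<in>V - Vi. lb w) = (\<Sum>w\<in>V - Vi. -1)" unfolding lb_def by (rule sum.cong) auto
    also have "(\<Sum>w\<in>Vi. lb w) = (\<Sum>w\<in>Vi. 0)" unfolding lb_def by (rule sum.cong) auto
    finally show ?thesis by simp
  qed
  have cdiff: "int (card (V - Vi)) = int (card V) - int (card Vi)"
  proof -
    have "card (V - Vi) = card V - card Vi" by (rule card_Diff_subset[OF finVi ViV])
    moreover have "card Vi \<le> card V" by (rule card_mono[OF finV ViV])
    ultimately show ?thesis by simp
  qed
  have BvE: "Bval V adj rot pinf a b = 2 * (\<Sum>v\<in>V. b v) + 2 * int (card V) - 2 - int (card Vi)"
    unfolding Vi_def by (rule Bval_eq[OF A1])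
  have key: "Bval V adj rot pinf a b - (int (card Vi) - 2) = 2 * (\<Sum>w\<in>V. b w - lb w)"
    using BvE slb cdiff by (simp add: sum_subtractf)
  have sn: "(\<Sum>w\<in>V. b w - lb w) \<ge> 0" using nn by (simp add: sum_nonneg)
  have z: "(\<Sum>w\<in>V. b w - lb w) = 0 \<longleftrightarrow> (\<forall>w\<in>V. b w - lb w = 0)"
    by (rule sum_nonneg_eq_0_iff[OF finV]) (use nn in blast)
  have cond: "(\<forall>w\<in>V. b w - lb w = 0) \<longleftrightarrow> (\<forall>w\<in>Vi. b w = 0) \<and> (\<forall>w\<in>V - Vi. b w = -1)"
    using ViV unfolding lb_def by auto
  have ge: "Bval V adj rot pinf a b \<ge> int (card Vi) - 2" using key sn by simp
  have iff: "Bval V adj rot pinf a b = int (card Vi) - 2 \<longleftrightarrow>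
      (\<forall>w\<in>Vi. b w = 0) \<and> (\<forall>w\<in>V - Vi. b w = -1) \<and> (\<forall>p'\<in>bounded_faces adj rot pinf. a p' = 1)"
  proof -
    have "Bval V adj rot pinf a b = int (card Vi) - 2 \<longleftrightarrow> (\<Sum>w\<in>V. b w - lb w) = 0"
    proof
      assume "Bval V adj rot pinf a b = int (card Vi) - 2"
      then show "(\<Sum>w\<in>V. b w - lb w) = 0" using key by linarith
    next
      assume "(\<Sum>w\<in>V. b w - lb w) = 0"
      then show "Bval V adj rot pinf a b = int (card Vi) - 2" using key by linarith
    qed
    then show ?thesis using z cond A1 by simp
  qed
  show ?thesis using B1 A1 ge iff unfolding Vi_def by simp
qed

end
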